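(* Assume $\Lambda>0$ and let $(g,K,F,E,u,\Theta,\rho,e)$ be a $C^1$ solution of the evolution system (S) on an interval $[0,T)$, with $g$ positive definite, $\rho>0$, $e\ge0$, $\Theta^{00}\ge0$, satisfying the constraints (C1)–(C4) for all $t$, and with $H(0)<0$. Then for all $t\in[0,T)$: $\frac{dH}{dt}\ge K_{ij}K^{ij}-\Lambda\ge\frac13H^2-\Lambda\ge0$, and $$H(0)-\Lambda t\le H(t)<-\sqrt{3\Lambda}.$$
   Context: Setting. $G$ is a three-dimensional connected Lie group of Bianchi type I–VIII, $(e_i)_{i=1,2,3}$ a left-invariant frame with structure constants $C^k_{ij}$ defined by $[e_i,e_j]=C^k_{ij}e_k$ (so $C^k_{ij}=-C^k_{ji}$ and the Jacobi identity holds). $\Lambda\in\mathbb{R}$ is a constant. Latin indices run over $1,2,3$; repeated indices are summed. Unknowns (functions of $t$): a symmetric positive definite matrix $g=(g_{ij})$ with inverse $(g^{ij})$; a symmetric matrix $K=(K_{ij})$; an antisymmetric matrix $F=(F_{ij})$; vectors $E=(E^i)$, $u=(u^i)$; $\Theta=(\Theta^{00},\Theta^{0i})$; a function $\rho>0$; a function $e\ge0$. Derived quantities: $u^0=\sqrt{1+g_{ij}u^iu^j}$, $u_i=g_{ij}u^j$; $H=g^{ij}K_{ij}$; $K^i_j=g^{ik}K_{kj}$, $K^{ij}=g^{ik}g^{jl}K_{kl}$; $F^{ij}=g^{ik}g^{jl}F_{kl}$; $\gamma^l_{ij}=\tfrac12 g^{lk}(-C^m_{jk}g_{im}+C^m_{ki}g_{jm}+C^m_{ij}g_{km})$;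 $R_{ij}=\gamma^l_{lm}\gamma^m_{ji}-\gamma^m_{jl}\gamma^l_{mi}-C^l_{mj}\gamma^m_{li}$, $R=g^{ij}R_{ij}$; $\tau_{00}=\tfrac12 g_{ij}E^iE^j+\tfrac14 g^{ik}g^{jl}F_{kl}F_{ij}$, $\tau_{0j}=-E^kF_{jk}$, $\tau_{ij}=(\tfrac12 g_{ij}g_{kl}-g_{ik}g_{jl})E^kE^l-\tfrac14 g_{ij}g^{km}g^{nl}F_{kl}F_{mn}+g^{kl}F_{ik}F_{jl}$; $\Theta_{00}=\Theta^{00}$, $\Theta_{0j}=-g_{jk}\Theta^{0k}$; $T_{00}=\tfrac43\rho(u^0)^2+\Theta_{00}$, $T_{0j}=-\tfrac43\rho u^0u_j+\Theta_{0j}$, $T_{ij}=\tfrac43\rho u_iu_j+\tfrac13\rho g_{ij}$; $\nabla$ is the Levi-Civita connection of the left-invariant metric $g$, so for left-invariant tensors $\nabla_kK_{ij}=-\gamma^l_{ki}K_{lj}-\gamma^l_{kj}K_{il}$ and $\nabla^iK_{ij}=g^{ik}\nabla_kK_{ij}$. Evolution system (S) (dot $=d/dt$): $\dot g_{ij}=-2K_{ij}$; $\dot K_{ij}=R_{ij}+HK_{ij}-2K^l_jK_{il}-8\pi(\tau_{ij}+T_{ij})+4\pi(-T_{00}+g^{lm}T_{lm})g_{ij}-\Lambda g_{ij}$; $\dot F_{ij}=C^k_{ij}g_{kl}E^l$; $\dot E^i=HE^i-C^j_{jk}E^k\frac{u^i}{u^0}-C^j_{jk}g^{kl}g^{im}F_{lm}-\tfrac12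 C^i_{jk}g^{jl}g^{km}F_{lm}$; $\dot u^i=2K^i_ju^j-\gamma^i_{jk}\frac{u^ju^k}{u^0}+\frac{3}{4\rho u^0}C^j_{jk}E^kE^i-\frac{3}{4\rho(u^0)^2}C^j_{jk}E^kg^{il}F_{ml}u^m$; $\dot\Theta^{00}=H\Theta^{00}-C^i_{ij}\Theta^{0j}+\tfrac13\rho H+\rho u^0$; $\dot\Theta^{0i}=H\Theta^{0i}+2K^i_j\Theta^{0j}-\tfrac{\rho}{3}(C^k_{kj}g^{ij}+\gamma^i_{jk}g^{jk})+\rho u^i$; $\dot\rho=-\big(\frac{3}{4u^0}+K_{ij}\frac{u^iu^j}{(u^0)^2}-H+C^i_{ij}\frac{u^j}{u^0}\big)\rho-\tfrac34 g_{il}C^j_{jk}E^kE^l\frac{u^i}{(u^0)^3}$; $\dot e=-\big(K_{ij}\frac{u^iu^j}{(u^0)^2}+C^i_{ik}\frac{u^k}{u^0}-H\big)e+\tfrac34 g_{ij}\frac{u^iE^j}{(u^0)^2}\frac{e^2}{\rho}$. Constraints: (C1) $R-K_{ij}K^{ij}+H^2=16\pi(\tau_{00}+T_{00})+2\Lambda$; (C2) $\nabla^iK_{ij}=-8\pi(\tau_{0j}+T_{0j})$; (C3) $C^l_{ij}F_{kl}+C^l_{jk}F_{il}+C^l_{ki}F_{jl}=0$; (C4) $C^i_{ik}E^k+eu^0=0$. For Bianchi types I–VIII the scalar curvature satisfies $R\le0$. *)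

theory Defs
  imports "HOL-Analysis.Analysis"
begin

text \<open>Indices 1,2,3 are represented by the three elements of the numeral type 3.
  Matrices are real^3^3 (entry (i,j) is A $ i $ j), vectors real^3.
  Structure constants: C k i j stands for C^k_{ij}, i.e. [e_i,e_j] = C^k_{ij} e_k.\<close>

type_synonym mat3 = "real^3^3"
type_synonym vec3 = "real^3"
type_synonym sconst = "3 \<Rightarrow> 3 \<Rightarrow> 3 \<Rightarrow> real"

abbreviation S :: "(3 \<Rightarrow> real) \<Rightarrow> real" where
  "S f \<equiv> sum f UNIV"

definition antisym_sc :: "sconst \<Rightarrow> bool" where
  "antisym_sc C \<longleftrightarrow> (\<forall>k i j. C k i j = - C k j i)"

definition jacobi_sc :: "sconst \<Rightarrow> bool" where
  "jacobi_sc C \<longleftrightarrow> (\<forall>i j k m.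
     S (\<lambda>l. C l i j * C m l k + C l j k * C m l i + C l k i * C m l j) = 0)"

text \<open>Levi-Civita symbol; the structure constants of so(3) = su(2) are [f_a,f_b] = eps a b c f_c.\<close>
definition eps :: "3 \<Rightarrow> 3 \<Rightarrow> 3 \<Rightarrow> real" where
  "eps a b c =
     (if (a,b,c) \<in> {(0,1,2),(1,2,0),(2,0,1)} then 1
      else if (a,b,c) \<in> {(0,2,1),(2,1,0),(1,0,2)} then -1 else 0)"

text \<open>Bianchi type IX: the Lie algebra is isomorphic to so(3), i.e. there is a basis
  f_a = P_a^i e_i (P invertible) with [f_a,f_b] = eps_{abc} f_c.\<close>
definition bianchi_IX :: "sconst \<Rightarrow> bool" where
  "bianchi_IX C \<longleftrightarrow> (\<exists>P :: mat3. invertible P \<and>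
     (\<forall>a b k. S (\<lambda>i. S (\<lambda>j. P $ a $ i * P $ b $ j * C k i j))
              = S (\<lambda>c. eps a b c * P $ c $ k)))"

definition bianchi_I_to_VIII :: "sconst \<Rightarrow> bool" where
  "bianchi_I_to_VIII C \<longleftrightarrow> antisym_sc C \<and> jacobi_sc C \<and> \<not> bianchi_IX C"

definition u0 :: "mat3 \<Rightarrow> vec3 \<Rightarrow> real" where
  "u0 g u = sqrt (1 + S (\<lambda>i. S (\<lambda>j. g$i$j * u$i * u$j)))"

definition ulow :: "mat3 \<Rightarrow> vec3 \<Rightarrow> 3 \<Rightarrow> real" where
  "ulow g u i = S (\<lambda>j. g$i$j * u$j)"

definition Hm :: "mat3 \<Rightarrow> mat3 \<Rightarrow> real" where
  "Hm g K = S (\<lambda>i. S (\<lambda>j. matrix_inv g $i$j * K$i$j))"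

definition Kmix :: "mat3 \<Rightarrow> mat3 \<Rightarrow> 3 \<Rightarrow> 3 \<Rightarrow> real" where
  "Kmix g K i j = S (\<lambda>k. matrix_inv g $i$k * K$k$j)"

definition Kup :: "mat3 \<Rightarrow> mat3 \<Rightarrow> 3 \<Rightarrow> 3 \<Rightarrow> real" where
  "Kup g K i j = S (\<lambda>k. S (\<lambda>l. matrix_inv g $i$k * matrix_inv g $j$l * K$k$l))"

definition KK :: "mat3 \<Rightarrow> mat3 \<Rightarrow> real" where
  "KK g K = S (\<lambda>i. S (\<lambda>j. K$i$j * Kup g K i j))"

definition gam :: "sconst \<Rightarrow> mat3 \<Rightarrow> 3 \<Rightarrow> 3 \<Rightarrow> 3 \<Rightarrow> real" where
  "gam C g l i j = 1/2 * S (\<lambda>k. matrix_inv g $l$k *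
      (- S (\<lambda>m. C m j k * g$i$m) + S (\<lambda>m. C m k i * g$j$m) + S (\<lambda>m. C m i j * g$k$m)))"

definition Ric :: "sconst \<Rightarrow> mat3 \<Rightarrow> 3 \<Rightarrow> 3 \<Rightarrow> real" where
  "Ric C g i j = S (\<lambda>l. S (\<lambda>m.
      gam C g l l m * gam C g m j i - gam C g m j l * gam C g l m i - C l m j * gam C g m l i))"

definition Rscal :: "sconst \<Rightarrow> mat3 \<Rightarrow> real" where
  "Rscal C g = S (\<lambda>i. S (\<lambda>j. matrix_inv g $i$j * Ric C g i j))"

definition tau00 :: "mat3 \<Rightarrow> vec3 \<Rightarrow> mat3 \<Rightarrow> real" where
  "tau00 g E F = 1/2 * S (\<lambda>i. S (\<lambda>j. g$i$j * E$i * E$j))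
     + 1/4 * S (\<lambda>i. S (\<lambda>j. S (\<lambda>k. S (\<lambda>l.
          matrix_inv g $i$k * matrix_inv g $j$l * F$k$l * F$i$j))))"

definition tau0 :: "vec3 \<Rightarrow> mat3 \<Rightarrow> 3 \<Rightarrow> real" where
  "tau0 E F j = - S (\<lambda>k. E$k * F$j$k)"

definition tau :: "mat3 \<Rightarrow> vec3 \<Rightarrow> mat3 \<Rightarrow> 3 \<Rightarrow> 3 \<Rightarrow> real" where
  "tau g E F i j =
     S (\<lambda>k. S (\<lambda>l. (1/2 * g$i$j * g$k$l - g$i$k * g$j$l) * E$k * E$l))
     - 1/4 * g$i$j * S (\<lambda>k. S (\<lambda>l. S (\<lambda>m. S (\<lambda>n.
          matrix_inv g $k$m * matrix_inv g $n$l * F$k$l * F$m$n))))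
     + S (\<lambda>k. S (\<lambda>l. matrix_inv g $k$l * F$i$k * F$j$l))"

definition Th0low :: "mat3 \<Rightarrow> vec3 \<Rightarrow> 3 \<Rightarrow> real" where
  "Th0low g Th0 j = - S (\<lambda>k. g$j$k * Th0$k)"

definition T00 :: "mat3 \<Rightarrow> vec3 \<Rightarrow> real \<Rightarrow> real \<Rightarrow> real" where
  "T00 g u rho Th00 = 4/3 * rho * (u0 g u)^2 + Th00"

definition T0 :: "mat3 \<Rightarrow> vec3 \<Rightarrow> real \<Rightarrow> vec3 \<Rightarrow> 3 \<Rightarrow> real" where
  "T0 g u rho Th0 j = - 4/3 * rho * u0 g u * ulow g u j + Th0low g Th0 j"

definition Tm :: "mat3 \<Rightarrow> vec3 \<Rightarrow> real \<Rightarrow> 3 \<Rightarrow> 3 \<Rightarrow> real" where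
  "Tm g u rho i j = 4/3 * rho * ulow g u i * ulow g u j + 1/3 * rho * g$i$j"

text \<open>nabla_k K_{ij} and nabla^i K_{ij} for left-invariant tensors\<close>
definition nablaK :: "sconst \<Rightarrow> mat3 \<Rightarrow> mat3 \<Rightarrow> 3 \<Rightarrow> 3 \<Rightarrow> 3 \<Rightarrow> real" where
  "nablaK C g K k i j = - S (\<lambda>l. gam C g l k i * K$l$j) - S (\<lambda>l. gam C g l k j * K$i$l)"

definition divK :: "sconst \<Rightarrow> mat3 \<Rightarrow> mat3 \<Rightarrow> 3 \<Rightarrow> real" where
  "divK C g K j = S (\<lambda>i. S (\<lambda>k. matrix_inv g $i$k * nablaK C g K k i j))"

definition Kdot :: "sconst \<Rightarrow> real \<Rightarrow> mat3 \<Rightarrow> mat3 \<Rightarrow> mat3 \<Rightarrow> vec3 \<Rightarrow> vec3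
                    \<Rightarrow> real \<Rightarrow> vec3 \<Rightarrow> real \<Rightarrow> mat3" where
  "Kdot C Lam g K F E u Th00 Th0 rho = (\<chi> i j.
     Ric C g i j + Hm g K * K$i$j - 2 * S (\<lambda>l. Kmix g K l j * K$i$l)
     - 8 * pi * (tau g E F i j + Tm g u rho i j)
     + 4 * pi * (- T00 g u rho Th00
                 + S (\<lambda>l. S (\<lambda>m. matrix_inv g $l$m * Tm g u rho l m))) * g$i$j
     - Lam * g$i$j)"

definition Fdot :: "sconst \<Rightarrow> mat3 \<Rightarrow> vec3 \<Rightarrow> mat3" where
  "Fdot C g E = (\<chi> i j. S (\<lambda>k. S (\<lambda>l. C k i j * g$k$l * E$l)))"

definition Edot :: "sconst \<Rightarrow> mat3 \<Rightarrow> mat3 \<Rightarrow> mat3 \<Rightarrow> vec3 \<Rightarrow> vec3 \<Rightarrow> vec3" where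
  "Edot C g K F E u = (\<chi> i.
     Hm g K * E$i
     - S (\<lambda>j. S (\<lambda>k. C j j k * E$k)) * u$i / u0 g u
     - S (\<lambda>j. S (\<lambda>k. S (\<lambda>l. S (\<lambda>m. C j j k * matrix_inv g $k$l * matrix_inv g $i$m * F$l$m))))
     - 1/2 * S (\<lambda>j. S (\<lambda>k. S (\<lambda>l. S (\<lambda>m. C i j k * matrix_inv g $j$l * matrix_inv g $k$m * F$l$m)))))"

definition udot :: "sconst \<Rightarrow> mat3 \<Rightarrow> mat3 \<Rightarrow> mat3 \<Rightarrow> vec3 \<Rightarrow> vec3 \<Rightarrow> real \<Rightarrow> vec3" where
  "udot C g K F E u rho = (\<chi> i.
     2 * S (\<lambda>j. Kmix g K i j * u$j)
     - S (\<lambda>j. S (\<lambda>k. gam C g i j k * u$j * u$k)) / u0 g u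
     + 3 / (4 * rho * u0 g u) * S (\<lambda>j. S (\<lambda>k. C j j k * E$k)) * E$i
     - 3 / (4 * rho * (u0 g u)^2) * S (\<lambda>j. S (\<lambda>k. C j j k * E$k))
         * S (\<lambda>l. S (\<lambda>m. matrix_inv g $i$l * F$m$l * u$m)))"

definition Th00dot :: "sconst \<Rightarrow> mat3 \<Rightarrow> mat3 \<Rightarrow> vec3 \<Rightarrow> real \<Rightarrow> vec3 \<Rightarrow> real \<Rightarrow> real" where
  "Th00dot C g K u Th00 Th0 rho =
     Hm g K * Th00 - S (\<lambda>i. S (\<lambda>j. C i i j * Th0$j)) + 1/3 * rho * Hm g K + rho * u0 g u"

definition Th0dot :: "sconst \<Rightarrow> mat3 \<Rightarrow> mat3 \<Rightarrow> vec3 \<Rightarrow> vec3 \<Rightarrow> real \<Rightarrow> vec3" where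
  "Th0dot C g K u Th0 rho = (\<chi> i.
     Hm g K * Th0$i + 2 * S (\<lambda>j. Kmix g K i j * Th0$j)
     - rho / 3 * (S (\<lambda>k. S (\<lambda>j. C k k j * matrix_inv g $i$j))
                  + S (\<lambda>j. S (\<lambda>k. gam C g i j k * matrix_inv g $j$k)))
     + rho * u$i)"

definition rhodot :: "sconst \<Rightarrow> mat3 \<Rightarrow> mat3 \<Rightarrow> vec3 \<Rightarrow> vec3 \<Rightarrow> real \<Rightarrow> real" where
  "rhodot C g K E u rho =
     - (3 / (4 * u0 g u) + S (\<lambda>i. S (\<lambda>j. K$i$j * u$i * u$j)) / (u0 g u)^2 - Hm g K
        + S (\<lambda>i. S (\<lambda>j. C i i j * u$j)) / u0 g u) * rho
     - 3/4 * S (\<lambda>i. S (\<lambda>l. S (\<lambda>j. S (\<lambda>k. g$i$l * C j j k * E$k * E$l * u$i)))) / (u0 g u)^3"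

definition edot :: "sconst \<Rightarrow> mat3 \<Rightarrow> mat3 \<Rightarrow> vec3 \<Rightarrow> vec3 \<Rightarrow> real \<Rightarrow> real \<Rightarrow> real" where
  "edot C g K E u rho e =
     - (S (\<lambda>i. S (\<lambda>j. K$i$j * u$i * u$j)) / (u0 g u)^2
        + S (\<lambda>i. S (\<lambda>k. C i i k * u$k)) / u0 g u - Hm g K) * e
     + 3/4 * S (\<lambda>i. S (\<lambda>j. g$i$j * u$i * E$j)) / (u0 g u)^2 * e^2 / rho"

definition C1 :: "sconst \<Rightarrow> real \<Rightarrow> mat3 \<Rightarrow> mat3 \<Rightarrow> mat3 \<Rightarrow> vec3 \<Rightarrow> vec3 \<Rightarrow> real \<Rightarrow> real \<Rightarrow> bool" where
  "C1 C Lam g K F E u Th00 rho \<longleftrightarrow>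
     Rscal C g - KK g K + (Hm g K)^2 = 16 * pi * (tau00 g E F + T00 g u rho Th00) + 2 * Lam"

definition C2 :: "sconst \<Rightarrow> mat3 \<Rightarrow> mat3 \<Rightarrow> mat3 \<Rightarrow> vec3 \<Rightarrow> vec3 \<Rightarrow> vec3 \<Rightarrow> real \<Rightarrow> bool" where
  "C2 C g K F E u Th0 rho \<longleftrightarrow>
     (\<forall>j. divK C g K j = - 8 * pi * (tau0 E F j + T0 g u rho Th0 j))"

definition C3 :: "sconst \<Rightarrow> mat3 \<Rightarrow> bool" where
  "C3 C F \<longleftrightarrow> (\<forall>i j k.
     S (\<lambda>l. C l i j * F$k$l + C l j k * F$i$l + C l k i * F$j$l) = 0)"

definition C4 :: "sconst \<Rightarrow> mat3 \<Rightarrow> vec3 \<Rightarrow> vec3 \<Rightarrow> real \<Rightarrow> bool" where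
  "C4 C g E u e \<longleftrightarrow> S (\<lambda>i. S (\<lambda>k. C i i k * E$k)) + e * u0 g u = 0"

definition symm3 :: "mat3 \<Rightarrow> bool" where
  "symm3 A \<longleftrightarrow> (\<forall>i j. A$i$j = A$j$i)"

definition antisymm3 :: "mat3 \<Rightarrow> bool" where
  "antisymm3 A \<longleftrightarrow> (\<forall>i j. A$i$j = - A$j$i)"

definition posdef3 :: "mat3 \<Rightarrow> bool" where
  "posdef3 A \<longleftrightarrow> symm3 A \<and> (\<forall>x::vec3. x \<noteq> 0 \<longrightarrow> x \<bullet> (A *v x) > 0)"

end

theory Submission
  imports Defs
begin

lemma S3: "S f = f 1 + f 2 + f 3" by (rule sum_3)

lemma eps_vals:
  "eps 1 2 3 = 1" "eps 2 3 1 = 1" "eps 3 1 2 = 1"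
  "eps 1 3 2 = -1" "eps 3 2 1 = -1" "eps 2 1 3 = -1"
  "eps 1 1 x = 0" "eps 2 2 x = 0" "eps 3 3 x = 0"
  "eps x 1 1 = 0" "eps x 2 2 = 0" "eps x 3 3 = 0"
  "eps 1 x 1 = 0" "eps 2 x 2 = 0" "eps 3 x 3 = 0"
  by (auto simp: eps_def)

definition adj3 :: "mat3 \<Rightarrow> mat3" where
  "adj3 A = vector [
     vector [A$2$2*A$3$3 - A$2$3*A$3$2, A$1$3*A$3$2 - A$1$2*A$3$3, A$1$2*A$2$3 - A$1$3*A$2$2],
     vector [A$2$3*A$3$1 - A$2$1*A$3$3, A$1$1*A$3$3 - A$1$3*A$3$1, A$1$3*A$2$1 - A$1$1*A$2$3],
     vector [A$2$1*A$3$2 - A$2$2*A$3$1, A$1$2*A$3$1 - A$1$1*A$3$2, A$1$1*A$2$2 - A$1$2*A$2$1]]"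

lemma vec_eq3: "(x::real^3) = y \<longleftrightarrow> x$1 = y$1 \<and> x$2 = y$2 \<and> x$3 = y$3"
  by (simp add: vec_eq_iff forall_3)

lemma mat_eq3: "(A::mat3) = B \<longleftrightarrow> (\<forall>i j. A$i$j = B$i$j)"
  by (simp add: vec_eq_iff)

lemma adj3_right: "A ** adj3 A = det A *\<^sub>R mat 1"
  unfolding mat_eq3 forall_3
  by (simp add: matrix_matrix_mult_def sum_3 det_3 adj3_def mat_def vector_3) algebra

lemma adj3_left: "adj3 A ** A = det A *\<^sub>R mat 1"
  unfolding mat_eq3 forall_3
  by (simp add: matrix_matrix_mult_def sum_3 det_3 adj3_def mat_def vector_3) algebra

lemma matrix_inv_eqI:
  fixes A B :: "real^'n^'n"
  assumes "A ** B = mat 1" "B ** A = mat 1"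
  shows "matrix_inv A = B"
proof -
  have inv: "invertible A" using assms invertible_def by blast
  let ?X = "matrix_inv A"
  have X: "A ** ?X = mat 1 \<and> ?X ** A = mat 1"
    unfolding matrix_inv_def by (rule someI_ex) (use inv invertible_def in blast)
  have "?X = ?X ** (A ** B)" using assms by (simp add: matrix_mul_rid)
  also have "\<dots> = (?X ** A) ** B" by (simp add: matrix_mul_assoc)
  also have "\<dots> = B" using X by (simp add: matrix_mul_lid)
  finally show ?thesis .
qed

lemma mmult_scaleR_right: "(A::real^'n^'m) ** (c *\<^sub>R B) = c *\<^sub>R (A ** (B::real^'k^'n))"
  by (simp add: vec_eq_iff matrix_matrix_mult_def sum_distrib_left mult_ac)
lemma mmult_scaleR_left: "(c *\<^sub>R (A::real^'n^'m)) ** B = c *\<^sub>R (A ** (B::real^'k^'n))"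
  by (simp add: vec_eq_iff matrix_matrix_mult_def sum_distrib_left mult_ac)

lemma matrix_inv_adj3:
  assumes "det A \<noteq> 0"
  shows "matrix_inv A = (1 / det A) *\<^sub>R adj3 A"
  apply (rule matrix_inv_eqI)
  using assms by (simp_all add: mmult_scaleR_right mmult_scaleR_left adj3_right adj3_left)

lemma matrix_inv_entry:
  assumes "det A \<noteq> 0"
  shows "matrix_inv A $ i $ j = adj3 A $ i $ j / det A"
  using assms by (simp add: matrix_inv_adj3)

lemma qf3: "x \<bullet> ((A::mat3) *v x) = (\<Sum>i\<in>UNIV. \<Sum>j\<in>UNIV. x$i * A$i$j * x$j)"
  by (simp add: inner_vec_def matrix_vector_mult_def sum_distrib_left mult_ac)

lemma symm3D: "symm3 A \<Longrightarrow> A$i$j = A$j$i" by (simp add: symm3_def)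

lemma pd_11: assumes "posdef3 A" shows "A$1$1 > 0"
proof -
  let ?x = "vector [1,0,0] :: real^3"
  have "?x \<noteq> 0" by (simp add: vec_eq3 vector_3)
  then have "?x \<bullet> (A *v ?x) > 0" using assms posdef3_def by blast
  then show ?thesis by (simp add: qf3 sum_3 vector_3)
qed

lemma pd_m2: assumes "posdef3 A" shows "A$1$1*A$2$2 - A$1$2*A$2$1 > 0"
proof -
  have s: "A$2$1 = A$1$2" using assms by (simp add: posdef3_def symm3_def)
  have a: "A$1$1 > 0" by (rule pd_11[OF assms])
  let ?x = "vector [- A$1$2, A$1$1, 0] :: real^3"
  have "?x \<noteq> 0" using a by (simp add: vec_eq3 vector_3)
  then have "?x \<bullet> (A *v ?x) > 0" using assms posdef3_def by blast
  then have "A$1$1 * (A$1$1*A$2$2 - A$1$2*A$2$1) > 0"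
    by (simp add: qf3 sum_3 vector_3 s) (simp add: algebra_simps power2_eq_square)
  then show ?thesis using a by (simp add: zero_less_mult_iff)
qed

lemma pd_det: assumes "posdef3 A" shows "det A > 0"
proof -
  have m: "A$1$1*A$2$2 - A$1$2*A$2$1 > 0" by (rule pd_m2[OF assms])
  let ?x = "vector [A$2$1*A$3$2 - A$2$2*A$3$1, A$1$2*A$3$1 - A$1$1*A$3$2, A$1$1*A$2$2 - A$1$2*A$2$1] :: real^3"
  have "?x \<noteq> 0" using m by (simp add: vec_eq3 vector_3)
  then have "?x \<bullet> (A *v ?x) > 0" using assms posdef3_def by blast
  moreover have "?x \<bullet> (A *v ?x) = det A * (A$1$1*A$2$2 - A$1$2*A$2$1)"
    by (simp add: qf3 sum_3 vector_3 det_3) algebra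
  ultimately show ?thesis using m by (simp add: zero_less_mult_iff)
qed

lemma chol_aux:
  fixes a b c d e f :: real
  assumes "a > 0" "a*d - b*b > 0"
  shows "f - c^2/a - (e - c*b/a)^2 / ((a*d - b*b)/a) = (a*d*f + 2*b*e*c - a*e^2 - d*c^2 - f*b^2)/(a*d - b*b)"
proof -
  have "a*d - b*b \<noteq> 0" using assms by simp
  with assms show ?thesis by (simp add: field_simps power2_eq_square)
qed

definition chol :: "mat3 \<Rightarrow> mat3" where
  "chol A = (let l11 = sqrt (A$1$1); l21 = A$2$1 / l11; l31 = A$3$1 / l11;
       l22 = sqrt (A$2$2 - l21^2); l32 = (A$3$2 - l31*l21) / l22;
       l33 = sqrt (A$3$3 - l31^2 - l32^2)
     in vector [vector [l11, 0, 0], vector [l21, l22, 0], vector [l31, l32, l33]])"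

lemma chol_props:
  assumes "posdef3 A"
  shows "chol A ** transpose (chol A) = A" and "det (chol A) > 0"
proof -
  have s: "A$2$1 = A$1$2" "A$3$1 = A$1$3" "A$3$2 = A$2$3"
    using assms by (auto simp: posdef3_def symm3_def)
  have a: "A$1$1 > 0" by (rule pd_11[OF assms])
  have m: "A$1$1*A$2$2 - A$1$2*A$2$1 > 0" by (rule pd_m2[OF assms])
  have d: "det A > 0" by (rule pd_det[OF assms])
  define l11 where "l11 = sqrt (A$1$1)"
  define l21 where "l21 = A$2$1 / l11"
  define l31 where "l31 = A$3$1 / l11"
  define r2 where "r2 = A$2$2 - l21^2"
  define l22 where "l22 = sqrt r2"
  define l32 where "l32 = (A$3$2 - l31*l21) / l22"
  define r3 where "r3 = A$3$3 - l31^2 - l32^2"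
  define l33 where "l33 = sqrt r3"
  have l11p: "l11 > 0" and l11s: "l11^2 = A$1$1" using a by (auto simp: l11_def)
  have r2e: "r2 = (A$1$1*A$2$2 - A$1$2*A$2$1) / A$1$1"
    unfolding r2_def l21_def using a l11s s by (simp add: field_simps power2_eq_square)
  have r2p: "r2 > 0" using r2e a m by simp
  have l22p: "l22 > 0" and l22s: "l22^2 = r2" using r2p by (auto simp: l22_def)
  have r3e: "r3 = det A / (A$1$1*A$2$2 - A$1$2*A$2$1)"
  proof -
    have "r3 = A$3$3 - A$1$3^2 / A$1$1 - (A$2$3 - A$1$3*A$1$2/A$1$1)^2 / ((A$1$1*A$2$2 - A$1$2*A$1$2)/A$1$1)"
    proof -
      have q: "l11 * l11 = A$1$1" using l11s by (simp add: power2_eq_square)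
      have q2: "l22^2 = (A$1$1*A$2$2 - A$1$2*A$1$2) / A$1$1" using l22s r2e s by simp
      show ?thesis unfolding r3_def l32_def l31_def l21_def
        using l11p l22p q q2 s l11s by (simp add: power_divide power_mult_distrib)
    qed
    also have "\<dots> = (A$1$1*A$2$2*A$3$3 + 2*A$1$2*A$2$3*A$1$3 - A$1$1*A$2$3^2 - A$2$2*A$1$3^2 - A$3$3*A$1$2^2)/(A$1$1*A$2$2 - A$1$2*A$1$2)"
      by (rule chol_aux) (use a m s in auto)
    also have "A$1$1*A$2$2*A$3$3 + 2*A$1$2*A$2$3*A$1$3 - A$1$1*A$2$3^2 - A$2$2*A$1$3^2 - A$3$3*A$1$2^2 = det A"
      by (simp add: det_3 s power2_eq_square algebra_simps)
    finally show ?thesis using s by simp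
  qed
  have r3p: "r3 > 0" using r3e d m by simp
  have l33p: "l33 > 0" and l33s: "l33^2 = r3" using r3p by (auto simp: l33_def)
  have cdef: "chol A = vector [vector [l11, 0, 0], vector [l21, l22, 0], vector [l31, l32, l33]]"
    unfolding chol_def Let_def l11_def l21_def l31_def l22_def l32_def l33_def r2_def r3_def ..
  show "det (chol A) > 0" unfolding cdef using l11p l22p l33p by (simp add: det_3 vector_3)
  have e1: "l11 * l11 = A$1$1" using l11s by (simp add: power2_eq_square)
  have e2: "l21 * l11 = A$2$1" unfolding l21_def using l11p by simp
  have e3: "l31 * l11 = A$3$1" unfolding l31_def using l11p by simp
  have e4: "l21*l21 + l22*l22 = A$2$2" using l22s unfolding r2_def by (simp add: power2_eq_square)
  have e5: "l31*l21 + l32*l22 = A$3$2" unfolding l32_def using l22p by simp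
  have e6: "l31*l31 + l32*l32 + l33*l33 = A$3$3" using l33s unfolding r3_def by (simp add: power2_eq_square)
  show "chol A ** transpose (chol A) = A"
    unfolding mat_eq3 forall_3 cdef
    apply (simp add: matrix_matrix_mult_def sum_3 vector_3 transpose_def)
    using e1 e2 e3 e4 e5 e6 s by (simp add: power2_eq_square mult.commute)
qed

definition lowC :: "sconst \<Rightarrow> mat3 \<Rightarrow> 3 \<Rightarrow> 3 \<Rightarrow> 3 \<Rightarrow> real" where
  "lowC C g k i j = S (\<lambda>m. g$k$m * C m i j)"

definition Gam :: "(3 \<Rightarrow> 3 \<Rightarrow> 3 \<Rightarrow> real) \<Rightarrow> 3 \<Rightarrow> 3 \<Rightarrow> 3 \<Rightarrow> real" where
  "Gam c k i j = - c i j k + c j k i + c k i j"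

definition tr3 :: "mat3 \<Rightarrow> (3 \<Rightarrow> 3 \<Rightarrow> 3 \<Rightarrow> real) \<Rightarrow> 3 \<Rightarrow> 3 \<Rightarrow> 3 \<Rightarrow> real" where
  "tr3 T c d a b = S (\<lambda>p. S (\<lambda>i. S (\<lambda>j. T$d$p * T$a$i * T$b$j * c p i j)))"

type_synonym t3 = "3 \<Rightarrow> 3 \<Rightarrow> 3 \<Rightarrow> real"

definition R1 :: "mat3 \<Rightarrow> t3 \<Rightarrow> 3 \<Rightarrow> 3 \<Rightarrow> real" where
  "R1 h G i j = S (\<lambda>l. S (\<lambda>m. S (\<lambda>k. h$l$k * G k l m) * S (\<lambda>k. h$m$k * G k j i)))"
definition R2 :: "mat3 \<Rightarrow> t3 \<Rightarrow> 3 \<Rightarrow> 3 \<Rightarrow> real" where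
  "R2 h G i j = S (\<lambda>l. S (\<lambda>m. S (\<lambda>k. h$m$k * G k j l) * S (\<lambda>k. h$l$k * G k m i)))"
definition R3 :: "mat3 \<Rightarrow> t3 \<Rightarrow> t3 \<Rightarrow> 3 \<Rightarrow> 3 \<Rightarrow> real" where
  "R3 h c G i j = S (\<lambda>l. S (\<lambda>m. S (\<lambda>k. h$l$k * c k m j) * S (\<lambda>k. h$m$k * G k l i)))"

definition RicF :: "mat3 \<Rightarrow> t3 \<Rightarrow> t3 \<Rightarrow> 3 \<Rightarrow> 3 \<Rightarrow> real" where
  "RicF h c G i j = 1/4 * R1 h G i j - 1/4 * R2 h G i j - 1/2 * R3 h c G i j"

lemma gam_low: "gam C g l i j = 1/2 * S (\<lambda>k. matrix_inv g $l$k * Gam (lowC C g) k i j)"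
  unfolding gam_def Gam_def lowC_def by (simp add: mult.commute)

lemma C_from_low:
  assumes "h ** g = mat 1"
  shows "C l m j = S (\<lambda>k. h$l$k * lowC C g k m j)"
proof -
  have r: "S (\<lambda>k. h$l$k * g$k$p) = (if l = p then 1 else 0)" for p
    using assms by (simp add: vec_eq_iff matrix_matrix_mult_def mat_def)
  have "S (\<lambda>k. h$l$k * lowC C g k m j) = S (\<lambda>k. S (\<lambda>p. h$l$k * g$k$p * C p m j))"
    unfolding lowC_def by (simp add: sum_distrib_left mult.assoc)
  also have "\<dots> = S (\<lambda>p. S (\<lambda>k. h$l$k * g$k$p * C p m j))" by (rule sum.swap)
  also have "\<dots> = S (\<lambda>p. S (\<lambda>k. h$l$k * g$k$p) * C p m j)" by (simp add: sum_distrib_right)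
  also have "\<dots> = S (\<lambda>p. if p = l then C p m j else 0)" by (rule sum.cong) (auto simp: r)
  also have "\<dots> = C l m j" by (simp add: r)
  finally show ?thesis by simp
qed

lemma Ric_low:
  assumes "matrix_inv g ** g = mat 1"
  shows "Ric C g i j = RicF (matrix_inv g) (lowC C g) (Gam (lowC C g)) i j"
proof -
  have c: "C l m j = S (\<lambda>k. matrix_inv g $l$k * lowC C g k m j)" for l m j
    by (rule C_from_low[OF assms])
  let ?h = "matrix_inv g" and ?c = "lowC C g"
  have "Ric C g i j = S (\<lambda>l. S (\<lambda>m.
      1/4 * (S (\<lambda>k. ?h$l$k * Gam ?c k l m) * S (\<lambda>k. ?h$m$k * Gam ?c k j i))
    - 1/4 * (S (\<lambda>k. ?h$m$k * Gam ?c k j l) * S (\<lambda>k. ?h$l$k * Gam ?c k m i))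
    - 1/2 * (S (\<lambda>k. ?h$l$k * ?c k m j) * S (\<lambda>k. ?h$m$k * Gam ?c k l i))))"
    unfolding Ric_def gam_low
    apply (rule sum.cong[OF refl])+
    apply (subst c)
    apply (simp add: algebra_simps)
    done
  also have "\<dots> = RicF ?h ?c (Gam ?c) i j"
    unfolding RicF_def R1_def R2_def R3_def
    by (simp only: sum_distrib_left[of "1/4"] sum_distrib_left[of "1/2"] sum_subtractf)
  finally show ?thesis .
qed

lemma cov1:
  assumes h: "\<And>x y. h$x$y = S (\<lambda>e. T$e$x * T$e$y)"
  shows "S (\<lambda>i. S (\<lambda>j. T$a$i * T$b$j * R1 h G i j)) = S (\<lambda>l. S (\<lambda>m. tr3 T G l l m * tr3 T G m b a))"
  unfolding R1_def tr3_def h sum_3 by algebra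

lemma cov2:
  assumes h: "\<And>x y. h$x$y = S (\<lambda>e. T$e$x * T$e$y)"
  shows "S (\<lambda>i. S (\<lambda>j. T$a$i * T$b$j * R2 h G i j)) = S (\<lambda>l. S (\<lambda>m. tr3 T G m b l * tr3 T G l m a))"
  unfolding R2_def tr3_def h sum_3 by algebra

lemma cov3:
  assumes h: "\<And>x y. h$x$y = S (\<lambda>e. T$e$x * T$e$y)"
  shows "S (\<lambda>i. S (\<lambda>j. T$a$i * T$b$j * R3 h c G i j)) = S (\<lambda>l. S (\<lambda>m. tr3 T c l m b * tr3 T G m l a))"
  unfolding R3_def tr3_def h sum_3 by algebra

lemma mat1_entry: "(mat 1 :: mat3) $ i $ j = (if i = j then 1 else 0)"
  by (simp add: mat_def)

lemma sum_mat1: "S (\<lambda>k. (mat 1 :: mat3) $ l $ k * f k) = f l"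
  using exhaust_3[of l] by (auto simp: mat1_entry sum_3)

lemma sum_mat1': "S (\<lambda>k. (mat 1 :: mat3) $ k $ l * f k) = f l"
  using exhaust_3[of l] by (auto simp: mat1_entry sum_3)

lemma matrix_inv_1: "matrix_inv (mat 1 :: mat3) = mat 1"
  by (rule matrix_inv_eqI) (simp_all add: matrix_mul_lid)

lemma lowC_1: "lowC D (mat 1) = D"
  by (simp add: lowC_def sum_mat1 fun_eq_iff)

lemma Gam_tr3: "Gam (tr3 T c) = tr3 T (Gam c)"
  unfolding fun_eq_iff Gam_def tr3_def sum_3 by (intro allI) algebra

lemma RicF_1:
  "RicF (mat 1) c G a b = 1/4 * S (\<lambda>l. S (\<lambda>m. G l l m * G m b a))
     - 1/4 * S (\<lambda>l. S (\<lambda>m. G m b l * G l m a)) - 1/2 * S (\<lambda>l. S (\<lambda>m. c l m b * G m l a))"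
  by (simp add: RicF_def R1_def R2_def R3_def sum_mat1)

lemma covRicF:
  assumes h: "\<And>x y. h$x$y = S (\<lambda>e. T$e$x * T$e$y)"
  shows "S (\<lambda>i. S (\<lambda>j. T$a$i * T$b$j * RicF h c G i j)) = RicF (mat 1) (tr3 T c) (tr3 T G) a b"
proof -
  have "S (\<lambda>i. S (\<lambda>j. T$a$i * T$b$j * RicF h c G i j)) =
     1/4 * S (\<lambda>i. S (\<lambda>j. T$a$i * T$b$j * R1 h G i j)) - 1/4 * S (\<lambda>i. S (\<lambda>j. T$a$i * T$b$j * R2 h G i j))
     - 1/2 * S (\<lambda>i. S (\<lambda>j. T$a$i * T$b$j * R3 h c G i j))"
    unfolding RicF_def sum_3 by algebra
  then show ?thesis unfolding cov1[OF h] cov2[OF h] cov3[OF h] RicF_1 by simp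
qed

lemma Rscal_frame:
  assumes inv: "matrix_inv g ** g = mat 1"
    and h: "\<And>x y. matrix_inv g $x$y = S (\<lambda>e. T$e$x * T$e$y)"
  shows "Rscal C g = Rscal (tr3 T (lowC C g)) (mat 1)"
proof -
  let ?h = "matrix_inv g" and ?c = "lowC C g"
  let ?F = "\<lambda>i j. RicF ?h ?c (Gam ?c) i j"
  have "Rscal C g = S (\<lambda>i. S (\<lambda>j. ?h$i$j * ?F i j))"
    unfolding Rscal_def Ric_low[OF inv] ..
  also have "\<dots> = S (\<lambda>a. S (\<lambda>i. S (\<lambda>j. T$a$i * T$a$j * ?F i j)))"
    unfolding h sum_3 by algebra
  also have "\<dots> = S (\<lambda>a. RicF (mat 1) (tr3 T ?c) (tr3 T (Gam ?c)) a a)"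
    by (simp add: covRicF[OF h])
  also have "\<dots> = Rscal (tr3 T ?c) (mat 1)"
  proof -
    have i1: "matrix_inv (mat 1::mat3) ** mat 1 = mat 1" by (simp add: matrix_inv_1 matrix_mul_lid)
    show ?thesis unfolding Rscal_def Ric_low[OF i1] matrix_inv_1 sum_mat1 lowC_1 Gam_tr3 ..
  qed
  finally show ?thesis .
qed

definition nM :: "t3 \<Rightarrow> 3 \<Rightarrow> 3 \<Rightarrow> real" where
  "nM D l k = 1/2 * S (\<lambda>i. S (\<lambda>j. eps l i j * D k i j))"
definition nn :: "t3 \<Rightarrow> 3 \<Rightarrow> 3 \<Rightarrow> real" where
  "nn D l k = (nM D l k + nM D k l) / 2"
definition aa :: "t3 \<Rightarrow> 3 \<Rightarrow> real" where
  "aa D j = -1/2 * S (\<lambda>k. D k k j)"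
definition Qf :: "t3 \<Rightarrow> real" where
  "Qf D = S (\<lambda>l. S (\<lambda>k. (nn D l k)^2)) - 1/2 * (S (\<lambda>l. nn D l l))^2"

definition asym :: "t3 \<Rightarrow> bool" where
  "asym D \<longleftrightarrow> (\<forall>k i j. D k i j = - D k j i)"

lemma asymD:
  assumes "asym D"
  shows "D k 1 1 = 0" "D k 2 2 = 0" "D k 3 3 = 0"
    "D k 2 1 = - D k 1 2" "D k 3 1 = - D k 1 3" "D k 3 2 = - D k 2 3"
  using assms unfolding asym_def by (metis add.inverse_inverse neg_equal_zero)+

lemma eps_all:
  "eps 1 2 3 = 1" "eps 2 3 1 = 1" "eps 3 1 2 = 1"
  "eps 1 3 2 = -1" "eps 3 2 1 = -1" "eps 2 1 3 = -1"
  "eps 1 1 1 = 0" "eps 1 1 2 = 0" "eps 1 1 3 = 0" "eps 1 2 1 = 0" "eps 1 2 2 = 0"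
  "eps 1 3 1 = 0" "eps 1 3 3 = 0" "eps 2 1 1 = 0" "eps 2 1 2 = 0" "eps 2 2 1 = 0"
  "eps 2 2 2 = 0" "eps 2 2 3 = 0" "eps 2 3 2 = 0" "eps 2 3 3 = 0" "eps 3 1 1 = 0"
  "eps 3 1 3 = 0" "eps 3 2 2 = 0" "eps 3 2 3 = 0" "eps 3 3 1 = 0" "eps 3 3 2 = 0" "eps 3 3 3 = 0"
  by (simp_all add: eps_def)

lemma Rscal_1_RicF: "Rscal D (mat 1) = S (\<lambda>a. RicF (mat 1) D (Gam D) a a)"
proof -
  have i1: "matrix_inv (mat 1::mat3) ** mat 1 = mat 1" by (simp add: matrix_inv_1 matrix_mul_lid)
  show ?thesis unfolding Rscal_def Ric_low[OF i1] matrix_inv_1 sum_mat1 lowC_1 ..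
qed

lemma ON_R:
  assumes "asym D"
  shows "Rscal D (mat 1) = - Qf D - 6 * S (\<lambda>j. (aa D j)^2)"
  unfolding Rscal_1_RicF RicF_1 Qf_def nn_def nM_def aa_def Gam_def sum_3 eps_all asymD[OF assms]
  by (simp add: field_simps power2_eq_square)

lemma ON_jac:
  assumes "asym D"
  shows "\<forall>m. S (\<lambda>l. D l 1 2 * D m l 3 + D l 2 3 * D m l 1 + D l 3 1 * D m l 2) = 2 * S (\<lambda>k. nn D m k * aa D k)"
  unfolding forall_3 nn_def nM_def aa_def sum_3 eps_all asymD[OF assms]
  by (simp add: field_simps)

lemma defin_id:
  fixes a b c d e f x y z :: real
  assumes s_def: "s = a + b + c" and r_def: "r = x^2 + y^2 + z^2"
    and q_def: "q = a*x^2 + b*y^2 + c*z^2 + 2*d*x*y + 2*e*x*z + 2*f*y*z"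
    and w_def: "w = 3*q - s*r"
  shows "4 * r^4 * ((3*a-s)^2 + (3*b-s)^2 + (3*c-s)^2 + 18*(d^2+e^2+f^2))
       = (2*r^2*(3*a-s) - w*(3*x^2 - r))^2 + (2*r^2*(3*b-s) - w*(3*y^2 - r))^2
         + (2*r^2*(3*c-s) - w*(3*z^2 - r))^2
         + 2*((2*r^2*(3*d) - w*(3*x*y))^2 + (2*r^2*(3*e) - w*(3*x*z))^2 + (2*r^2*(3*f) - w*(3*y*z))^2)
         + 6 * r^2 * w^2"
  unfolding s_def r_def q_def w_def by algebra

lemma defin:
  fixes a b c d e f x y z :: real
  assumes Q: "a^2+b^2+c^2+2*(d^2+e^2+f^2) - (a+b+c)^2/2 < 0" and nz: "x^2+y^2+z^2 > 0"
  shows "(a+b+c) * (a*x^2 + b*y^2 + c*z^2 + 2*d*x*y + 2*e*x*z + 2*f*y*z) > 0"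
proof -
  define s where "s = a + b + c"
  define r where "r = x^2 + y^2 + z^2"
  define q where "q = a*x^2 + b*y^2 + c*z^2 + 2*d*x*y + 2*e*x*z + 2*f*y*z"
  define w where "w = 3*q - s*r"
  define tz where "tz = (3*a-s)^2 + (3*b-s)^2 + (3*c-s)^2 + 18*(d^2+e^2+f^2)"
  have id: "4 * r^4 * tz \<ge> 6 * r^2 * w^2"
  proof -
    note e = defin_id[OF s_def r_def q_def w_def]
    have "0 \<le> (2*r^2*(3*a-s) - w*(3*x^2 - r))^2 + (2*r^2*(3*b-s) - w*(3*y^2 - r))^2
         + (2*r^2*(3*c-s) - w*(3*z^2 - r))^2
         + 2*((2*r^2*(3*d) - w*(3*x*y))^2 + (2*r^2*(3*e) - w*(3*x*z))^2 + (2*r^2*(3*f) - w*(3*y*z))^2)"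
      by (intro add_nonneg_nonneg mult_nonneg_nonneg) simp_all
    then show ?thesis using e unfolding tz_def by linarith
  qed
  have rp: "r > 0" using nz r_def by simp
  have tz: "tz = 9 * (a^2+b^2+c^2+2*(d^2+e^2+f^2) - (a+b+c)^2/2) + 3/2 * s^2"
    unfolding tz_def s_def by (simp add: field_simps power2_eq_square)
  have "6 * r^2 * w^2 \<le> 4 * r^4 * tz" using id by simp
  also have "\<dots> < 4 * r^4 * (3/2 * s^2)" using Q rp unfolding tz by simp
  finally have X: "6 * r^2 * w^2 < 4 * r^4 * (3/2 * s^2)" .
  have "r^2 * w^2 < r^2 * (r * s)^2" using X by (simp add: power2_eq_square power4_eq_xxxx algebra_simps)
  then have w2: "w^2 < (r * s)^2" using rp by (simp add: mult_less_cancel_left_pos)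
  have sn: "s \<noteq> 0" using w2 by auto
  have "(s * w)^2 < (s^2 * r)^2"
  proof -
    have "(s * w)^2 = s^2 * w^2" by (simp add: power_mult_distrib)
    also have "\<dots> < s^2 * (r * s)^2" using w2 sn by simp
    also have "\<dots> = (s^2 * r)^2" by (simp add: power2_eq_square)
    finally show ?thesis .
  qed
  then have "(- (s * w))^2 < (s^2 * r)^2" by simp
  then have "- (s * w) < s^2 * r" by (rule power2_less_imp_less) (use rp in simp)
  then have "3 * (s * q) > 0" unfolding w_def by (simp add: algebra_simps power2_eq_square)
  then show ?thesis unfolding s_def q_def by simp
qed

lemma epsdet: "\<forall>a b m. S (\<lambda>i. S (\<lambda>j. S (\<lambda>l. eps i j l * L$i$a * L$j$b * L$l$m))) = det (L::mat3) * eps a b m"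
  unfolding forall_3 sum_3 eps_all det_3 by (intro conjI) algebra+

lemma IX_regroup:
  fixes E :: "3 \<Rightarrow> 3 \<Rightarrow> 3 \<Rightarrow> real" and L :: mat3
  shows "S (\<lambda>i. S (\<lambda>j. (s * L$i$a) * (s * L$j$b) * S (\<lambda>l. E i j l * (t * S (\<lambda>m. L$l$m * L$k$m)))))
       = s^2 * t * S (\<lambda>m. L$k$m * S (\<lambda>i. S (\<lambda>j. S (\<lambda>l. E i j l * L$i$a * L$j$b * L$l$m))))"
  unfolding sum_3 by algebra

lemma det_scale_transpose: "det (c *\<^sub>R transpose (L::mat3)) = c^3 * det L"
  by (simp add: det_3 transpose_def power3_eq_cube) algebra

lemma IX_from_chol:
  fixes D :: t3 and L :: mat3 and t :: real
  assumes t: "t = 1 \<or> t = -1" and dL: "det L > 0"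
    and Dd: "\<And>k i j. D k i j = S (\<lambda>l. eps i j l * (t * S (\<lambda>m. L$l$m * L$k$m)))"
  shows "bianchi_IX D"
  unfolding bianchi_IX_def
proof (intro exI conjI allI)
  define s where "s = t / det L"
  let ?P = "s *\<^sub>R transpose L"
  have t2: "t * t = 1" using t by auto
  have "det ?P \<noteq> 0" unfolding det_scale_transpose s_def using dL t by auto
  then show "invertible ?P" by (simp add: invertible_det_nz)
  fix a b k
  have P: "?P $ x $ y = s * L$y$x" for x y by (simp add: transpose_def)
  have "S (\<lambda>i. S (\<lambda>j. ?P $ a $ i * ?P $ b $ j * D k i j))
     = s^2 * t * S (\<lambda>m. L$k$m * S (\<lambda>i. S (\<lambda>j. S (\<lambda>l. eps i j l * L$i$a * L$j$b * L$l$m))))"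
    unfolding P Dd by (rule IX_regroup)
  also have "\<dots> = s^2 * t * det L * S (\<lambda>m. L$k$m * eps a b m)"
    using epsdet by (simp add: sum_distrib_left mult_ac)
  also have "\<dots> = S (\<lambda>c. eps a b c * ?P $ c $ k)"
    unfolding P s_def using dL t2 by (simp add: sum_distrib_left power2_eq_square field_simps transpose_def)
  finally show "S (\<lambda>i. S (\<lambda>j. ?P $ a $ i * ?P $ b $ j * D k i j)) = S (\<lambda>c. eps a b c * ?P $ c $ k)" .
qed

lemma ON_decomp:
  assumes as: "asym D" and a0: "\<And>j. aa D j = 0"
  shows "\<forall>k i j. D k i j = S (\<lambda>l. eps i j l * nn D l k)"
proof -
  have h: "D 1 1 j + D 2 2 j + D 3 3 j = 0" for j using a0[of j] by (simp add: aa_def sum_3)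
  note h1 = h[of 1] and h2 = h[of 2] and h3 = h[of 3]
  show ?thesis
    using h1 h2 h3 unfolding forall_3 nn_def nM_def sum_3 eps_all asymD[OF as]
    by (intro conjI; simp add: field_simps; linarith?)
qed

lemma vec3_nz: "(x::real^3) \<noteq> 0 \<Longrightarrow> x$1^2 + x$2^2 + x$3^2 > 0"
proof -
  assume "x \<noteq> 0"
  then have "x$1 \<noteq> 0 \<or> x$2 \<noteq> 0 \<or> x$3 \<noteq> 0" by (simp add: vec_eq3)
  then show ?thesis by (smt (verit) zero_less_power2 zero_le_power2)
qed

lemma ON_IX:
  assumes as: "asym D" and jac: "jacobi_sc D" and Q: "Qf D < 0"
  shows "bianchi_IX D"
proof -
  let ?n = "nn D"
  have nsym: "?n l k = ?n k l" for l k by (simp add: nn_def)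
  define sg where "sg = S (\<lambda>l. ?n l l)"
  have Q': "(?n 1 1)^2 + (?n 2 2)^2 + (?n 3 3)^2 + 2*((?n 1 2)^2 + (?n 1 3)^2 + (?n 2 3)^2)
      - (?n 1 1 + ?n 2 2 + ?n 3 3)^2/2 < 0"
    using Q unfolding Qf_def sum_3 using nsym[of 2 1] nsym[of 3 1] nsym[of 3 2] by simp
  have qpos: "sg * S (\<lambda>l. S (\<lambda>k. x$l * ?n l k * x$k)) > 0" if "x \<noteq> 0" for x :: "real^3"
  proof -
    have e: "S (\<lambda>l. S (\<lambda>k. x$l * ?n l k * x$k)) = ?n 1 1 * (x$1)^2 + ?n 2 2 * (x$2)^2 + ?n 3 3 * (x$3)^2
       + 2 * ?n 1 2 * x$1 * x$2 + 2 * ?n 1 3 * x$1 * x$3 + 2 * ?n 2 3 * x$2 * x$3"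
      unfolding sum_3 using nsym[of 2 1] nsym[of 3 1] nsym[of 3 2]
      by (simp add: power2_eq_square algebra_simps)
    have "sg * (?n 1 1 * (x$1)^2 + ?n 2 2 * (x$2)^2 + ?n 3 3 * (x$3)^2
       + 2 * ?n 1 2 * x$1 * x$2 + 2 * ?n 1 3 * x$1 * x$3 + 2 * ?n 2 3 * x$2 * x$3) > 0"
      unfolding sg_def sum_3 by (rule defin[OF Q' vec3_nz[OF that]])
    then show ?thesis using e by simp
  qed
  have Jz: "S (\<lambda>k. ?n m k * aa D k) = 0" for m
  proof -
    have "S (\<lambda>l. D l 1 2 * D m l 3 + D l 2 3 * D m l 1 + D l 3 1 * D m l 2) = 0"
      using jac unfolding jacobi_sc_def by blast
    then show ?thesis using ON_jac[OF as] by simp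
  qed
  have a0: "aa D j = 0" for j
  proof (rule ccontr)
    assume "aa D j \<noteq> 0"
    define v where "v = (vector [aa D 1, aa D 2, aa D 3] :: real^3)"
    have vj: "v$i = aa D i" for i unfolding v_def using exhaust_3[of i] by (auto simp: vector_3)
    have "v \<noteq> 0" using \<open>aa D j \<noteq> 0\<close> vj by (metis zero_index)
    then have "sg * S (\<lambda>l. S (\<lambda>k. v$l * ?n l k * v$k)) > 0" by (rule qpos)
    moreover have "S (\<lambda>l. S (\<lambda>k. v$l * ?n l k * v$k)) = 0"
    proof -
      have "S (\<lambda>l. S (\<lambda>k. v$l * ?n l k * v$k)) = S (\<lambda>l. v$l * S (\<lambda>k. ?n l k * aa D k))"
        by (simp add: vj sum_distrib_left mult_ac)
      then show ?thesis using Jz by simp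
    qed
    ultimately show False by simp
  qed
  have Dd: "D k i j = S (\<lambda>l. eps i j l * ?n l k)" for k i j
    using ON_decomp[OF as a0] by blast
  have sgnz: "sg \<noteq> 0"
  proof -
    have "(vector [1,0,0] :: real^3) \<noteq> 0" by (simp add: vec_eq3 vector_3)
    then have "sg * S (\<lambda>l. S (\<lambda>k. (vector [1,0,0] :: real^3)$l * ?n l k * (vector [1,0,0] :: real^3)$k)) > 0"
      by (rule qpos)
    then show ?thesis by auto
  qed
  define t where "t = (if sg > 0 then 1 else (-1::real))"
  have t: "t = 1 \<or> t = -1" unfolding t_def by auto
  have tt: "t * t = 1" using t by auto
  define Nm :: mat3 where "Nm = (\<chi> l k. t * ?n l k)"
  have Nme: "Nm $ l $ k = t * ?n l k" for l k by (simp add: Nm_def)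
  have pd: "posdef3 Nm"
    unfolding posdef3_def symm3_def
  proof (intro conjI allI impI)
    fix i j show "Nm $ i $ j = Nm $ j $ i" by (simp add: Nme nsym)
  next
    fix x :: "real^3" assume "x \<noteq> 0"
    then have p: "sg * S (\<lambda>l. S (\<lambda>k. x$l * ?n l k * x$k)) > 0" by (rule qpos)
    have "x \<bullet> (Nm *v x) = t * S (\<lambda>l. S (\<lambda>k. x$l * ?n l k * x$k))"
      unfolding qf3 Nme by (simp add: sum_distrib_left mult_ac)
    also have "\<dots> > 0" using p sgnz unfolding t_def by (auto simp: zero_less_mult_iff)
    finally show "x \<bullet> (Nm *v x) > 0" .
  qed
  let ?L = "chol Nm"
  have LL: "?L ** transpose ?L = Nm" and dL: "det ?L > 0" using chol_props[OF pd] by auto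
  have ne: "?n l k = t * S (\<lambda>m. ?L$l$m * ?L$k$m)" for l k
  proof -
    have "Nm $ l $ k = (?L ** transpose ?L) $ l $ k" using LL by simp
    also have "\<dots> = S (\<lambda>m. ?L$l$m * ?L$k$m)" by (simp add: matrix_matrix_mult_def transpose_def)
    finally have "Nm $ l $ k = S (\<lambda>m. ?L$l$m * ?L$k$m)" .
    then show ?thesis using Nme[of l k] tt by (metis mult.assoc mult_1)
  qed
  show ?thesis
    by (rule IX_from_chol[OF t dL]) (simp add: Dd ne)
qed

lemma ginv_props:
  assumes pd: "posdef3 g"
  shows "matrix_inv g ** g = mat 1" "g ** matrix_inv g = mat 1"
    "matrix_inv g $ i $ j = matrix_inv g $ j $ i" "posdef3 (matrix_inv g)"
proof -
  have d: "det g \<noteq> 0" using pd_det[OF pd] by simp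
  have s: "g$2$1 = g$1$2" "g$3$1 = g$1$3" "g$3$2 = g$2$3" using pd by (auto simp: posdef3_def symm3_def)
  show l: "matrix_inv g ** g = mat 1"
    using d by (simp add: matrix_inv_adj3 mmult_scaleR_left adj3_left)
  show r: "g ** matrix_inv g = mat 1"
    using d by (simp add: matrix_inv_adj3 mmult_scaleR_right adj3_right)
  have sym: "\<forall>i j. matrix_inv g $ i $ j = matrix_inv g $ j $ i"
    unfolding forall_3 matrix_inv_entry[OF d] adj3_def using s by (simp add: vector_3)
  then show "matrix_inv g $ i $ j = matrix_inv g $ j $ i" by blast
  show "posdef3 (matrix_inv g)"
    unfolding posdef3_def symm3_def
  proof (intro conjI allI impI)
    fix i j show "matrix_inv g $ i $ j = matrix_inv g $ j $ i" using sym by blast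
  next
    fix x :: "real^3" assume x: "x \<noteq> 0"
    let ?y = "matrix_inv g *v x"
    have gy: "g *v ?y = x" by (simp add: matrix_vector_mul_assoc r)
    have "?y \<noteq> 0" using gy x by auto
    then have "?y \<bullet> (g *v ?y) > 0" using pd posdef3_def by blast
    then show "x \<bullet> (matrix_inv g *v x) > 0" using gy by (simp add: inner_commute)
  qed
qed

lemma lowC_asym:
  assumes "antisym_sc C" shows "lowC C g k i j = - lowC C g k j i"
proof -
  have "lowC C g k i j = S (\<lambda>m. - (g$k$m * C m j i))"
  proof -
    have ax: "C m i j = - C m j i" for m using assms unfolding antisym_sc_def by blast
    show ?thesis unfolding lowC_def by (rule sum.cong) (simp, subst ax, simp)
  qed
  then show ?thesis by (simp add: sum_negf lowC_def)
qed

lemma tr3_asym: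
  assumes a: "\<And>p i j. c p i j = - c p j i"
  shows "asym (tr3 T c)"
proof -
  have "c p 1 1 = 0" "c p 2 2 = 0" "c p 3 3 = 0" for p using a by (metis add.inverse_inverse neg_equal_zero)+
  then show ?thesis unfolding asym_def tr3_def sum_3 using a[of _ 2 1] a[of _ 3 1] a[of _ 3 2]
    by (simp add: algebra_simps)
qed

lemma lower_regroup:
  "S (\<lambda>d. T$d$q * tr3 T c d a b) = S (\<lambda>i. S (\<lambda>j. T$a$i * T$b$j * S (\<lambda>p. S (\<lambda>e. T$e$q * T$e$p) * c p i j)))"
  unfolding tr3_def sum_3 by algebra

lemma lowering:
  assumes h: "\<And>x y. matrix_inv g $x$y = S (\<lambda>e. T$e$x * T$e$y)" and inv: "matrix_inv g ** g = mat 1"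
  shows "S (\<lambda>d. T$d$q * tr3 T (lowC C g) d a b) = S (\<lambda>i. S (\<lambda>j. T$a$i * T$b$j * C q i j))"
  unfolding lower_regroup h[symmetric] C_from_low[OF inv, of C q] ..

definition Jp :: "t3 \<Rightarrow> 3 \<Rightarrow> 3 \<Rightarrow> 3 \<Rightarrow> 3 \<Rightarrow> real" where
  "Jp X i j r m = S (\<lambda>q. X q i j * X m q r)"

lemma jac_split: "jacobi_sc X \<longleftrightarrow> (\<forall>i j k m. Jp X i j k m + Jp X j k i m + Jp X k i j m = 0)"
  unfolding jacobi_sc_def Jp_def by (simp add: sum.distrib)

lemma JT_regroup1:
  "S (\<lambda>d. X d * tr3 T c e d c') = S (\<lambda>p. S (\<lambda>q. S (\<lambda>r. T$e$p * T$c'$r * c p q r * S (\<lambda>d. T$d$q * X d))))"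
  unfolding tr3_def sum_3 by algebra

lemma JT_regroup2:
  "S (\<lambda>p. S (\<lambda>q. S (\<lambda>r. T$e$p * T$c'$r * S (\<lambda>m. g$p$m * C m q r) * S (\<lambda>i. S (\<lambda>j. T$a$i * T$b$j * C q i j)))))
   = S (\<lambda>p. S (\<lambda>m. T$e$p * g$p$m * S (\<lambda>i. S (\<lambda>j. S (\<lambda>r. T$a$i * T$b$j * T$c'$r * S (\<lambda>q. C q i j * C m q r))))))"
  unfolding sum_3 by algebra

lemma JT:
  assumes h: "\<And>x y. matrix_inv g $x$y = S (\<lambda>e. T$e$x * T$e$y)" and inv: "matrix_inv g ** g = mat 1"
  shows "Jp (tr3 T (lowC C g)) a b c' e = S (\<lambda>p. S (\<lambda>m. T$e$p * g$p$m *
           S (\<lambda>i. S (\<lambda>j. S (\<lambda>r. T$a$i * T$b$j * T$c'$r * Jp C i j r m)))))"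
proof -
  let ?D = "tr3 T (lowC C g)"
  have "Jp ?D a b c' e = S (\<lambda>d. ?D d a b * ?D e d c')" by (simp add: Jp_def)
  also have "\<dots> = S (\<lambda>p. S (\<lambda>q. S (\<lambda>r. T$e$p * T$c'$r * lowC C g p q r * S (\<lambda>d. T$d$q * ?D d a b))))"
    by (rule JT_regroup1)
  also have "\<dots> = S (\<lambda>p. S (\<lambda>q. S (\<lambda>r. T$e$p * T$c'$r * S (\<lambda>m. g$p$m * C m q r) * S (\<lambda>i. S (\<lambda>j. T$a$i * T$b$j * C q i j)))))"
    unfolding lowering[OF h inv] lowC_def ..
  also have "\<dots> = S (\<lambda>p. S (\<lambda>m. T$e$p * g$p$m *
           S (\<lambda>i. S (\<lambda>j. S (\<lambda>r. T$a$i * T$b$j * T$c'$r * Jp C i j r m)))))"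
    unfolding JT_regroup2 Jp_def ..
  finally show ?thesis .
qed

lemma J3_regroup:
  fixes J :: "3 \<Rightarrow> 3 \<Rightarrow> 3 \<Rightarrow> real"
  shows "S (\<lambda>i. S (\<lambda>j. S (\<lambda>r. T$a$i * T$b$j * T$c$r * J i j r)))
       + S (\<lambda>i. S (\<lambda>j. S (\<lambda>r. T$b$i * T$c$j * T$a$r * J i j r)))
       + S (\<lambda>i. S (\<lambda>j. S (\<lambda>r. T$c$i * T$a$j * T$b$r * J i j r)))
     = S (\<lambda>i. S (\<lambda>j. S (\<lambda>r. T$a$i * T$b$j * T$c$r * (J i j r + J j r i + J r i j))))"
  unfolding sum_3 by algebra

lemma jac_transfer:
  assumes h: "\<And>x y. matrix_inv g $x$y = S (\<lambda>e. T$e$x * T$e$y)" and inv: "matrix_inv g ** g = mat 1"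
    and jac: "jacobi_sc C"
  shows "jacobi_sc (tr3 T (lowC C g))"
  unfolding jac_split
proof (intro allI)
  fix a b c e
  have z: "Jp C i j r m + Jp C j r i m + Jp C r i j m = 0" for i j r m using jac unfolding jac_split by blast
  have "Jp (tr3 T (lowC C g)) a b c e + Jp (tr3 T (lowC C g)) b c a e + Jp (tr3 T (lowC C g)) c a b e
     = S (\<lambda>p. S (\<lambda>m. T$e$p * g$p$m *
           (S (\<lambda>i. S (\<lambda>j. S (\<lambda>r. T$a$i * T$b$j * T$c$r * Jp C i j r m)))
          + S (\<lambda>i. S (\<lambda>j. S (\<lambda>r. T$b$i * T$c$j * T$a$r * Jp C i j r m)))
          + S (\<lambda>i. S (\<lambda>j. S (\<lambda>r. T$c$i * T$a$j * T$b$r * Jp C i j r m))))))"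
    unfolding JT[OF h inv] by (simp add: sum.distrib distrib_left)
  also have "\<dots> = 0" unfolding J3_regroup z by simp
  finally show "Jp (tr3 T (lowC C g)) a b c e + Jp (tr3 T (lowC C g)) b c a e + Jp (tr3 T (lowC C g)) c a b e = 0" .
qed

lemma IX_regroup1:
  "S (\<lambda>i. S (\<lambda>j. (P' ** T) $ a $ i * (P' ** T) $ b $ j * C k i j))
   = S (\<lambda>a'. S (\<lambda>b'. P'$a$a' * P'$b$b' * S (\<lambda>i. S (\<lambda>j. T$a'$i * T$b'$j * C k i j))))"
  unfolding matrix_matrix_mult_def sum_3 by simp algebra

lemma IX_regroup2:
  "S (\<lambda>a'. S (\<lambda>b'. P'$a$a' * P'$b$b' * S (\<lambda>d. T$d$k * X d a' b')))
   = S (\<lambda>d. T$d$k * S (\<lambda>a'. S (\<lambda>b'. P'$a$a' * P'$b$b' * X d a' b')))"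
  unfolding sum_3 by algebra

lemma IX_regroup3:
  "S (\<lambda>d. T$d$k * S (\<lambda>c. eps a b c * P'$c$d)) = S (\<lambda>c. eps a b c * (P' ** T) $ c $ k)"
  unfolding matrix_matrix_mult_def sum_3 by simp algebra

lemma IX_transfer:
  assumes h: "\<And>x y. matrix_inv g $x$y = S (\<lambda>e. T$e$x * T$e$y)" and inv: "matrix_inv g ** g = mat 1"
    and dT: "det T \<noteq> 0" and IX: "bianchi_IX (tr3 T (lowC C g))"
  shows "bianchi_IX C"
proof -
  let ?D = "tr3 T (lowC C g)"
  obtain P' where iP: "invertible P'"
    and P': "\<And>a b k. S (\<lambda>i. S (\<lambda>j. P'$a$i * P'$b$j * ?D k i j)) = S (\<lambda>c. eps a b c * P'$c$k)"
    using IX unfolding bianchi_IX_def by blast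
  show ?thesis unfolding bianchi_IX_def
  proof (intro exI conjI allI)
    show "invertible (P' ** T)"
      using iP dT by (simp add: invertible_det_nz det_mul)
    fix a b k
    have "S (\<lambda>i. S (\<lambda>j. (P' ** T) $ a $ i * (P' ** T) $ b $ j * C k i j))
      = S (\<lambda>a'. S (\<lambda>b'. P'$a$a' * P'$b$b' * S (\<lambda>d. T$d$k * ?D d a' b')))"
      unfolding IX_regroup1 lowering[OF h inv] ..
    also have "\<dots> = S (\<lambda>d. T$d$k * S (\<lambda>c. eps a b c * P'$c$d))"
      unfolding IX_regroup2 P' ..
    also have "\<dots> = S (\<lambda>c. eps a b c * (P' ** T) $ c $ k)" by (rule IX_regroup3)
    finally show "S (\<lambda>i. S (\<lambda>j. (P' ** T) $ a $ i * (P' ** T) $ b $ j * C k i j)) = S (\<lambda>c. eps a b c * (P' ** T) $ c $ k)" .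
  qed
qed

lemma R_nonpos:
  assumes B: "bianchi_I_to_VIII C" and pd: "posdef3 g"
  shows "Rscal C g \<le> 0"
proof -
  note gi = ginv_props[OF pd]
  let ?h = "matrix_inv g"
  let ?L = "chol ?h"
  let ?T = "transpose ?L"
  have LL: "?L ** transpose ?L = ?h" and dL: "det ?L > 0" using chol_props[OF gi(4)] by auto
  have h: "?h $x$y = S (\<lambda>e. ?T$e$x * ?T$e$y)" for x y
  proof -
    have "?h $x$y = (?L ** transpose ?L) $x$y" using LL by simp
    then show ?thesis by (simp add: matrix_matrix_mult_def transpose_def)
  qed
  have dT: "det ?T \<noteq> 0" using dL by (simp add: det_transpose)
  let ?D = "tr3 ?T (lowC C g)"
  have as: "antisym_sc C" and jac: "jacobi_sc C" and nIX: "\<not> bianchi_IX C"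
    using B by (auto simp: bianchi_I_to_VIII_def)
  have asD: "asym ?D" by (rule tr3_asym) (rule lowC_asym[OF as])
  have jD: "jacobi_sc ?D" by (rule jac_transfer[OF h gi(1) jac])
  have R: "Rscal C g = - Qf ?D - 6 * S (\<lambda>j. (aa ?D j)^2)"
    using Rscal_frame[OF gi(1) h] ON_R[OF asD] by simp
  show ?thesis
  proof (cases "Qf ?D < 0")
    case True
    then have "bianchi_IX ?D" by (rule ON_IX[OF asD jD])
    then have "bianchi_IX C" by (rule IX_transfer[OF h gi(1) dT])
    with nIX show ?thesis by simp
  next
    case False
    have "S (\<lambda>j. (aa ?D j)^2) \<ge> 0" by (simp add: sum_nonneg)
    then show ?thesis using False R by simp
  qed
qed

lemma frame_T:
  assumes pd: "posdef3 g"
  shows "\<exists>T::mat3. \<forall>x y. matrix_inv g $x$y = S (\<lambda>e. T$e$x * T$e$y)"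
proof -
  note gi = ginv_props[OF pd]
  let ?h = "matrix_inv g"
  let ?L = "chol ?h"
  have LL: "?L ** transpose ?L = ?h" using chol_props[OF gi(4)] by auto
  have "?h $x$y = S (\<lambda>e. transpose ?L$e$x * transpose ?L$e$y)" for x y
  proof -
    have "?h $x$y = (?L ** transpose ?L) $x$y" using LL by simp
    then show ?thesis by (simp add: matrix_matrix_mult_def transpose_def)
  qed
  then show ?thesis by blast
qed

lemma inv_row: "h ** g = mat 1 \<Longrightarrow> S (\<lambda>j. h$i$j * g$j$l) = (if i = l then 1 else (0::real))"
  by (simp add: vec_eq_iff matrix_matrix_mult_def mat_def)

lemma ghg:
  assumes inv: "h ** g = mat 1" and gs: "\<And>i j. g$i$j = g$j$i"
  shows "S (\<lambda>i. S (\<lambda>j. g$i$k * h$i$j * g$j$l)) = (g$k$l :: real)"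
proof -
  have "S (\<lambda>i. S (\<lambda>j. g$i$k * h$i$j * g$j$l)) = S (\<lambda>i. g$i$k * S (\<lambda>j. h$i$j * g$j$l))"
    by (simp add: sum_distrib_left mult.assoc)
  also have "\<dots> = S (\<lambda>i. g$i$k * (if i = l then 1 else 0))" by (simp add: inv_row[OF inv])
  also have "\<dots> = g$l$k" using exhaust_3[of l] by (auto simp: sum_3)
  finally show ?thesis using gs by simp
qed

lemma trhg:
  assumes inv: "h ** g = mat 1" and gs: "\<And>i j. g$i$j = g$j$i"
  shows "S (\<lambda>i. S (\<lambda>j. h$i$j * g$i$j)) = (3::real)"
proof -
  have "S (\<lambda>j. h$i$j * g$i$j) = 1" for i using inv_row[OF inv, of i i] gs by (simp add: gs)
  then show ?thesis by (simp add: sum_3)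
qed

lemma sq3: "(a + b + c)^2 / 3 \<le> a^2 + b^2 + (c::real)^2"
proof -
  have "0 \<le> (a-b)^2 + (b-c)^2 + (c-a)^2" by simp
  then show ?thesis by (simp add: power2_eq_square field_simps)
qed

lemma KK_frame:
  assumes h: "\<And>x y. matrix_inv g $x$y = S (\<lambda>e. T$e$x * T$e$y)"
  shows "KK g K = S (\<lambda>a. S (\<lambda>b. (S (\<lambda>i. S (\<lambda>j. T$a$i * T$b$j * K$i$j)))^2))"
    and "Hm g K = S (\<lambda>a. S (\<lambda>i. S (\<lambda>j. T$a$i * T$a$j * K$i$j)))"
  unfolding KK_def Kup_def Hm_def h sum_3 power2_eq_square by algebra+

lemma KK_ge:
  assumes pd: "posdef3 g"
  shows "KK g K \<ge> (Hm g K)^2 / 3"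
proof -
  obtain T where h: "\<And>x y. matrix_inv g $x$y = S (\<lambda>e. T$e$x * T$e$y)" using frame_T[OF pd] by blast
  define X where "X a b = S (\<lambda>i. S (\<lambda>j. T$a$i * T$b$j * K$i$j))" for a b
  have e1: "KK g K = S (\<lambda>a. S (\<lambda>b. (X a b)^2))" unfolding KK_frame(1)[OF h] X_def ..
  have e2: "Hm g K = X 1 1 + X 2 2 + X 3 3" unfolding KK_frame(2)[OF h] X_def sum_3 ..
  have "(X 1 1 + X 2 2 + X 3 3)^2/3 \<le> (X 1 1)^2 + (X 2 2)^2 + (X 3 3)^2" by (rule sq3)
  also have "\<dots> \<le> S (\<lambda>a. S (\<lambda>b. (X a b)^2))"
    unfolding sum_3 by (simp add: add_nonneg_nonneg)
  finally show ?thesis unfolding e1 e2 .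
qed

lemma FF_frame:
  assumes h: "\<And>x y. matrix_inv g $x$y = S (\<lambda>e. T$e$x * T$e$y)"
  shows "S (\<lambda>i. S (\<lambda>j. S (\<lambda>k. S (\<lambda>l. matrix_inv g $i$k * matrix_inv g $j$l * F$k$l * F$i$j))))
     = S (\<lambda>a. S (\<lambda>b. (S (\<lambda>i. S (\<lambda>j. T$a$i * T$b$j * F$i$j)))^2))"
  unfolding h sum_3 power2_eq_square by algebra

lemma qf_nonneg:
  assumes pd: "posdef3 g"
  shows "S (\<lambda>i. S (\<lambda>j. g$i$j * u$i * u$j)) \<ge> 0"
proof -
  have q: "\<forall>x. x \<noteq> 0 \<longrightarrow> x \<bullet> (g *v x) > 0" using pd by (simp add: posdef3_def)
  have "u \<bullet> (g *v u) \<ge> 0"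
  proof (cases "u = 0")
    case True then show ?thesis by simp
  next
    case False then have "u \<bullet> (g *v u) > 0" using q by blast
    then show ?thesis by simp
  qed
  then show ?thesis unfolding qf3 by (simp add: mult_ac)
qed

lemma tau00_nonneg:
  assumes pd: "posdef3 g"
  shows "tau00 g E F \<ge> 0"
proof -
  obtain T where h: "\<And>x y. matrix_inv g $x$y = S (\<lambda>e. T$e$x * T$e$y)" using frame_T[OF pd] by blast
  have a: "S (\<lambda>i. S (\<lambda>j. g$i$j * E$i * E$j)) \<ge> 0" by (rule qf_nonneg[OF pd])
  have b: "S (\<lambda>i. S (\<lambda>j. S (\<lambda>k. S (\<lambda>l. matrix_inv g $i$k * matrix_inv g $j$l * F$k$l * F$i$j)))) \<ge> 0"
    unfolding FF_frame[OF h] by (simp add: sum_nonneg)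
  show ?thesis unfolding tau00_def using a b by simp
qed

lemma u0_ge1:
  assumes pd: "posdef3 g"
  shows "u0 g u \<ge> 1"
proof -
  have "S (\<lambda>i. S (\<lambda>j. g$i$j * u$i * u$j)) \<ge> 0" by (rule qf_nonneg[OF pd])
  then have "1 \<le> 1 + S (\<lambda>i. S (\<lambda>j. g$i$j * u$i * u$j))" by simp
  then show ?thesis unfolding u0_def by (rule real_sqrt_ge_1_iff[THEN iffD2])
qed

lemma T00_pos:
  assumes pd: "posdef3 g" and r: "rho > 0" and th: "Th00 \<ge> 0"
  shows "T00 g u rho Th00 > 0"
proof -
  have "u0 g u \<ge> 1" by (rule u0_ge1[OF pd])
  then have "(u0 g u)^2 \<ge> 1" by (simp add: one_le_power)
  then have "(u0 g u)^2 > 0" by linarith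
  then have "4/3 * rho * (u0 g u)^2 > 0" using r by (simp add: mult_pos_pos)
  then show ?thesis unfolding T00_def using th by simp
qed

lemma hsym_rules:
  assumes "\<And>i j. h$i$j = h$j$i"
  shows "h$2$1 = h$1$2" "h$3$1 = h$1$3" "h$3$2 = h$2$3"
  using assms by blast+

lemma tau_split:
  "tau g E F i j = 1/2 * g$i$j * S (\<lambda>k. S (\<lambda>l. g$k$l * E$k * E$l))
     - S (\<lambda>k. S (\<lambda>l. g$i$k * g$j$l * E$k * E$l))
     - 1/4 * g$i$j * S (\<lambda>k. S (\<lambda>l. S (\<lambda>m. S (\<lambda>n. matrix_inv g $k$m * matrix_inv g $n$l * F$k$l * F$m$n))))
     + S (\<lambda>k. S (\<lambda>l. matrix_inv g $k$l * F$i$k * F$j$l))"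
  unfolding tau_def sum_3 by (simp add: field_simps)

lemma trB_regroup:
  "S (\<lambda>i. S (\<lambda>j. h$i$j * S (\<lambda>k. S (\<lambda>l. g$i$k * g$j$l * E$k * E$l))))
   = S (\<lambda>k. S (\<lambda>l. E$k * E$l * S (\<lambda>i. S (\<lambda>j. g$i$k * h$i$j * g$j$l))))"
  unfolding sum_3 by algebra

lemma lin4:
  fixes h :: mat3
  shows "S (\<lambda>i. S (\<lambda>j. h$i$j * (a * g i j * X - B i j - b * g i j * Y + Cc i j)))
   = a * X * S (\<lambda>i. S (\<lambda>j. h$i$j * g i j)) - S (\<lambda>i. S (\<lambda>j. h$i$j * B i j))
     - b * Y * S (\<lambda>i. S (\<lambda>j. h$i$j * g i j)) + S (\<lambda>i. S (\<lambda>j. h$i$j * Cc i j))"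
  unfolding sum_3 by algebra

lemma tr_tau:
  assumes pd: "posdef3 g"
  shows "S (\<lambda>i. S (\<lambda>j. matrix_inv g $i$j * tau g E F i j)) = tau00 g E F"
proof -
  note gi = ginv_props[OF pd]
  let ?h = "matrix_inv g"
  have gs: "g$i$j = g$j$i" for i j using pd by (simp add: posdef3_def symm3_def)
  have hs: "?h$i$j = ?h$j$i" for i j by (rule gi(3))
  note hr = hsym_rules[OF hs]
  define EE where "EE = S (\<lambda>k. S (\<lambda>l. g$k$l * E$k * E$l))"
  define FF where "FF = S (\<lambda>i. S (\<lambda>j. S (\<lambda>k. S (\<lambda>l. ?h $i$k * ?h $j$l * F$k$l * F$i$j))))"
  have FF2: "S (\<lambda>k. S (\<lambda>l. S (\<lambda>m. S (\<lambda>n. ?h $k$m * ?h $n$l * F$k$l * F$m$n)))) = FF"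
    unfolding FF_def sum_3 hr by algebra
  have CC: "S (\<lambda>i. S (\<lambda>j. ?h$i$j * S (\<lambda>k. S (\<lambda>l. ?h $k$l * F$i$k * F$j$l)))) = FF"
    unfolding FF_def sum_3 hr by algebra
  have BB: "S (\<lambda>i. S (\<lambda>j. ?h$i$j * S (\<lambda>k. S (\<lambda>l. g$i$k * g$j$l * E$k * E$l)))) = EE"
    unfolding trB_regroup ghg[OF gi(1) gs] EE_def by (simp add: mult_ac)
  have tr: "S (\<lambda>i. S (\<lambda>j. ?h$i$j * g$i$j)) = 3" by (rule trhg[OF gi(1) gs])
  have "S (\<lambda>i. S (\<lambda>j. ?h$i$j * tau g E F i j)) = 1/2 * EE * 3 - EE - 1/4 * FF * 3 + FF"
    unfolding tau_split FF2 EE_def[symmetric]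
    unfolding lin4[of ?h "1/2" "\<lambda>i j. g$i$j" EE] tr BB CC ..
  also have "\<dots> = tau00 g E F" unfolding tau00_def EE_def FF_def by (simp add: mult_ac)
  finally show ?thesis .
qed

lemma KKmix:
  assumes hs: "\<And>i j. matrix_inv g $i$j = matrix_inv g $j$i" and Ks: "symm3 K"
  shows "S (\<lambda>i. S (\<lambda>j. matrix_inv g $i$j * S (\<lambda>l. Kmix g K l j * K$i$l))) = KK g K"
proof -
  note hr = hsym_rules[OF hs]
  have kr: "K$2$1 = K$1$2" "K$3$1 = K$1$3" "K$3$2 = K$2$3" using Ks by (auto simp: symm3_def)
  show ?thesis unfolding KK_def Kup_def Kmix_def sum_3 hr kr by algebra
qed

lemma KK_hKh:
  assumes hs: "\<And>i j. matrix_inv g $i$j = matrix_inv g $j$i"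
  shows "S (\<lambda>i. S (\<lambda>j. S (\<lambda>k. S (\<lambda>l. matrix_inv g $i$k * K$k$l * matrix_inv g $l$j)) * K$i$j)) = KK g K"
proof -
  note hr = hsym_rules[OF hs]
  show ?thesis unfolding KK_def Kup_def sum_3 hr by algebra
qed

lemma trT_nonneg:
  assumes pd: "posdef3 g" and r: "rho > 0"
  shows "S (\<lambda>l. S (\<lambda>m. matrix_inv g $l$m * Tm g u rho l m)) \<ge> 0"
proof -
  note gi = ginv_props[OF pd]
  have gs: "g$i$j = g$j$i" for i j using pd by (simp add: posdef3_def symm3_def)
  define v :: "real^3" where "v = (\<chi> i. ulow g u i)"
  have q: "S (\<lambda>i. S (\<lambda>j. matrix_inv g $i$j * v$i * v$j)) \<ge> 0" by (rule qf_nonneg[OF gi(4)])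
  have tr: "S (\<lambda>i. S (\<lambda>j. matrix_inv g $i$j * g$i$j)) = 3" by (rule trhg[OF gi(1) gs])
  have "S (\<lambda>l. S (\<lambda>m. matrix_inv g $l$m * Tm g u rho l m))
     = 4/3 * rho * S (\<lambda>i. S (\<lambda>j. matrix_inv g $i$j * v$i * v$j)) + 1/3 * rho * S (\<lambda>i. S (\<lambda>j. matrix_inv g $i$j * g$i$j))"
    unfolding Tm_def v_def sum_3 by (simp add: algebra_simps)
  also have "\<dots> \<ge> 0" using q r tr by simp
  finally show ?thesis .
qed

lemma lin_trace:
  fixes h :: mat3
  shows "S (\<lambda>i. S (\<lambda>j. h$i$j * (R i j + H * K i j - 2 * M i j - c8 * (ta i j + tm i j) + c4 * X * g i j - L * g i j)))
   = S (\<lambda>i. S (\<lambda>j. h$i$j * R i j)) + H * S (\<lambda>i. S (\<lambda>j. h$i$j * K i j)) - 2 * S (\<lambda>i. S (\<lambda>j. h$i$j * M i j))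
     - c8 * (S (\<lambda>i. S (\<lambda>j. h$i$j * ta i j)) + S (\<lambda>i. S (\<lambda>j. h$i$j * tm i j)))
     + c4 * X * S (\<lambda>i. S (\<lambda>j. h$i$j * g i j)) - L * S (\<lambda>i. S (\<lambda>j. h$i$j * g i j))"
  unfolding sum_3 by algebra

lemma Hdot_bound:
  assumes pd: "posdef3 g" and Ks: "symm3 K" and r: "rho > 0" and th: "Th00 \<ge> 0"
    and c1: "C1 C Lam g K F E u Th00 rho"
  shows "2 * KK g K + S (\<lambda>i. S (\<lambda>j. matrix_inv g $i$j * Kdot C Lam g K F E u Th00 Th0 rho $ i $ j))
     \<ge> KK g K - Lam"
proof -
  note gi = ginv_props[OF pd]
  have gs: "g$i$j = g$j$i" for i j using pd by (simp add: posdef3_def symm3_def)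
  let ?h = "matrix_inv g"
  define trT where "trT = S (\<lambda>l. S (\<lambda>m. ?h $l$m * Tm g u rho l m))"
  have tr: "S (\<lambda>i. S (\<lambda>j. ?h$i$j * g$i$j)) = 3" by (rule trhg[OF gi(1) gs])
  have e: "S (\<lambda>i. S (\<lambda>j. ?h$i$j * Kdot C Lam g K F E u Th00 Th0 rho $ i $ j))
     = Rscal C g + Hm g K * Hm g K - 2 * KK g K - 8 * pi * (tau00 g E F + trT)
       + 4 * pi * (- T00 g u rho Th00 + trT) * 3 - Lam * 3"
    unfolding trT_def Kdot_def vec_lambda_beta
    unfolding lin_trace[of ?h "\<lambda>i j. Ric C g i j" "Hm g K" "\<lambda>i j. K$i$j" "\<lambda>i j. S (\<lambda>l. Kmix g K l j * K$i$l)"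
       "8 * pi" "\<lambda>i j. tau g E F i j" "\<lambda>i j. Tm g u rho i j" "4 * pi"
       "- T00 g u rho Th00 + S (\<lambda>l. S (\<lambda>m. ?h $l$m * Tm g u rho l m))" "\<lambda>i j. g$i$j" Lam]
    unfolding tr tr_tau[OF pd] KKmix[OF gi(3) Ks] Rscal_def[symmetric] Hm_def[symmetric]
    by simp
  have t0: "tau00 g E F \<ge> 0" by (rule tau00_nonneg[OF pd])
  have t1: "T00 g u rho Th00 > 0" by (rule T00_pos[OF pd r th])
  have t2: "trT \<ge> 0" unfolding trT_def by (rule trT_nonneg[OF pd r])
  have c: "Rscal C g - KK g K + (Hm g K)^2 = 16 * pi * (tau00 g E F + T00 g u rho Th00) + 2 * Lam"
    using c1 by (simp add: C1_def)
  show ?thesis unfolding e using c t0 t1 t2 pi_gt_zero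
    by (simp add: power2_eq_square algebra_simps)
qed

lemma Dok_add: "\<exists>D. (f has_real_derivative D) (at t within I) \<Longrightarrow> \<exists>D. (g has_real_derivative D) (at t within I) \<Longrightarrow> \<exists>D. ((\<lambda>x. f x + g x) has_real_derivative D) (at t within I)"
  using DERIV_add by blast
lemma Dok_diff: "\<exists>D. (f has_real_derivative D) (at t within I) \<Longrightarrow> \<exists>D. (g has_real_derivative D) (at t within I) \<Longrightarrow> \<exists>D. ((\<lambda>x. f x - g x) has_real_derivative D) (at t within I)"
  using DERIV_diff by blast
lemma Dok_mult: "\<exists>D. (f has_real_derivative D) (at t within I) \<Longrightarrow> \<exists>D. (g has_real_derivative D) (at t within I) \<Longrightarrow> \<exists>D. ((\<lambda>x. f x * g x) has_real_derivative D) (at t within I)"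
  using DERIV_mult by blast
lemma Dok_div: "\<exists>D. (f has_real_derivative D) (at t within I) \<Longrightarrow> \<exists>D. (g has_real_derivative D) (at t within I) \<Longrightarrow> g t \<noteq> 0 \<Longrightarrow> \<exists>D. ((\<lambda>x. f x / g x) has_real_derivative D) (at t within I)"
  using DERIV_divide by blast

lemma comp_deriv:
  assumes "(g has_vector_derivative G) F"
  shows "((\<lambda>s. g s $ i $ j) has_real_derivative G $ i $ j) F"
proof -
  have "((\<lambda>s. g s $ i) has_vector_derivative G $ i) F"
    using bounded_linear.has_vector_derivative[OF bounded_linear_vec_nth assms] .
  then have "((\<lambda>s. g s $ i $ j) has_vector_derivative G $ i $ j) F"
    using bounded_linear.has_vector_derivative[OF bounded_linear_vec_nth] by blast
  then show ?thesis by (simp add: has_real_derivative_iff_has_vector_derivative)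
qed

lemma Dok_adj:
  assumes c: "\<And>i j. \<exists>D. ((\<lambda>s. g s $ i $ j) has_real_derivative D) (at t within I)"
  shows "\<exists>D. ((\<lambda>s. adj3 (g s) $ i $ j) has_real_derivative D) (at t within I)"
  using exhaust_3[of i] exhaust_3[of j]
  by (auto simp: adj3_def vector_3 intro!: Dok_diff Dok_mult c)

lemma Dok_det:
  fixes g :: "real \<Rightarrow> mat3"
  assumes c: "\<And>i j. \<exists>D. ((\<lambda>s. g s $ i $ j) has_real_derivative D) (at t within I)"
  shows "\<exists>D. ((\<lambda>s. det (g s)) has_real_derivative D) (at t within I)"
  apply (subst det_3)
  by (intro Dok_diff Dok_add Dok_mult c)

lemma deriv_unique_within:
  assumes "at t within I \<noteq> bot" "(f has_real_derivative D1) (at t within I)" "(f has_real_derivative D2) (at t within I)"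
  shows "D1 = D2"
  using assms vector_derivative_unique_within has_real_derivative_iff_has_vector_derivative by metis

lemma solve_D:
  fixes h g D G :: mat3
  assumes inv: "h ** g = mat 1"
    and e: "\<And>i l. S (\<lambda>j. G$i$j * h$j$l + g$i$j * D$j$l) = 0"
  shows "D$m$l = - S (\<lambda>i. S (\<lambda>j. h$m$i * G$i$j * h$j$l))"
proof -
  have e': "S (\<lambda>j. g$i$j * D$j$l) = - S (\<lambda>j. G$i$j * h$j$l)" for i
    using e[of i l] by (simp add: sum.distrib eq_neg_iff_add_eq_0 add.commute)
  have "D$m$l = S (\<lambda>j. (if m = j then 1 else 0) * D$j$l)"
    using exhaust_3[of m] by (auto simp: sum_3)
  also have "\<dots> = S (\<lambda>j. S (\<lambda>i. h$m$i * g$i$j) * D$j$l)" by (simp add: inv_row[OF inv])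
  also have "\<dots> = S (\<lambda>i. h$m$i * S (\<lambda>j. g$i$j * D$j$l))" unfolding sum_3 by algebra
  also have "\<dots> = - S (\<lambda>i. S (\<lambda>j. h$m$i * G$i$j * h$j$l))" unfolding e' sum_3 by algebra
  finally show ?thesis .
qed

lemma inv_deriv:
  fixes g :: "real \<Rightarrow> mat3"
  assumes tI: "t \<in> I" and nb: "at t within I \<noteq> bot" and pd: "\<And>s. s \<in> I \<Longrightarrow> posdef3 (g s)"
    and gd: "(g has_vector_derivative G) (at t within I)"
  shows "((\<lambda>s. matrix_inv (g s) $ m $ l) has_real_derivative
           - S (\<lambda>i. S (\<lambda>j. matrix_inv (g t) $m$i * G$i$j * matrix_inv (g t) $j$l))) (at t within I)"
proof -
  have c: "((\<lambda>s. g s $i$j) has_real_derivative G$i$j) (at t within I)" for i j by (rule comp_deriv[OF gd])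
  have c': "\<exists>D. ((\<lambda>s. g s $i$j) has_real_derivative D) (at t within I)" for i j using c by blast
  have hD: "\<exists>D. ((\<lambda>s. matrix_inv (g s) $ i $ j) has_real_derivative D) (at t within I)" for i j
  proof -
    have "\<exists>D. ((\<lambda>s. adj3 (g s) $ i $ j / det (g s)) has_real_derivative D) (at t within I)"
      by (rule Dok_div[OF Dok_adj[OF c'] Dok_det[OF c']]) (use pd_det[OF pd[OF tI]] in simp)
    then obtain D where D: "((\<lambda>s. adj3 (g s) $ i $ j / det (g s)) has_real_derivative D) (at t within I)" by blast
    have "((\<lambda>s. matrix_inv (g s) $ i $ j) has_real_derivative D) (at t within I)"
    proof (rule has_field_derivative_transform_within[OF D zero_less_one tI])
      fix x assume "x \<in> I"
      then have "det (g x) \<noteq> 0" using pd_det[OF pd] by (metis less_irrefl)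
      then show "adj3 (g x) $ i $ j / det (g x) = matrix_inv (g x) $ i $ j" by (simp add: matrix_inv_entry)
    qed
    then show ?thesis by blast
  qed
  then obtain Dh where Dh: "\<And>i j. ((\<lambda>s. matrix_inv (g s) $ i $ j) has_real_derivative Dh i j) (at t within I)"
    by metis
  define Dm :: mat3 where "Dm = (\<chi> i j. Dh i j)"
  have Dm: "Dm $ i $ j = Dh i j" for i j by (simp add: Dm_def)
  have gi: "matrix_inv (g t) ** g t = mat 1" "g s ** matrix_inv (g s) = mat 1" if "s \<in> I" for s
    using ginv_props[OF pd[OF tI]] ginv_props[OF pd[OF that]] by auto
  have rel: "S (\<lambda>j. G$i$j * matrix_inv (g t) $j$l' + g t $i$j * Dm$j$l') = 0" for i l'
  proof -
    have d1: "((\<lambda>s. S (\<lambda>j. g s $i$j * matrix_inv (g s) $j$l')) has_real_derivative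
              S (\<lambda>j. G$i$j * matrix_inv (g t) $j$l' + Dh j l' * g t $i$j)) (at t within I)"
      by (intro DERIV_sum DERIV_mult c Dh)
    have d0: "((\<lambda>s. S (\<lambda>j. g s $i$j * matrix_inv (g s) $j$l')) has_real_derivative 0) (at t within I)"
    proof (rule has_field_derivative_transform_within[OF DERIV_const zero_less_one tI])
      fix x assume x: "x \<in> I"
      show "(if i = l' then 1 else 0) = S (\<lambda>j. g x $i$j * matrix_inv (g x) $j$l')"
        using gi(2)[OF x] by (simp add: inv_row)
    qed
    have "S (\<lambda>j. G$i$j * matrix_inv (g t) $j$l' + Dh j l' * g t $i$j) = 0"
      using deriv_unique_within[OF nb d1 d0] .
    then show ?thesis by (simp add: Dm mult.commute)
  qed
  have "Dm $ m $ l = - S (\<lambda>i. S (\<lambda>j. matrix_inv (g t) $m$i * G$i$j * matrix_inv (g t) $j$l))"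
    by (rule solve_D[OF gi(1)[OF tI] rel])
  then show ?thesis using Dh[of m l] by (simp add: Dm)
qed

lemma H_deriv:
  fixes g K :: "real \<Rightarrow> mat3"
  assumes tI: "t \<in> I" and nb: "at t within I \<noteq> bot" and pd: "\<And>s. s \<in> I \<Longrightarrow> posdef3 (g s)"
    and gd: "(g has_vector_derivative G) (at t within I)"
    and kd: "(K has_vector_derivative KD) (at t within I)"
  shows "((\<lambda>s. Hm (g s) (K s)) has_real_derivative
      S (\<lambda>i. S (\<lambda>j. (- S (\<lambda>k. S (\<lambda>l. matrix_inv (g t) $i$k * G$k$l * matrix_inv (g t) $l$j))) * K t $i$j
            + KD$i$j * matrix_inv (g t) $i$j))) (at t within I)"
  unfolding Hm_def
  by (intro DERIV_sum DERIV_mult inv_deriv[OF tI nb pd gd] comp_deriv[OF kd])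

theorem mainTheorem7:
  fixes C :: sconst and Lam T :: real
    and g K F :: "real \<Rightarrow> mat3"
    and E u Th0 :: "real \<Rightarrow> vec3"
    and Th00 rho e :: "real \<Rightarrow> real"
  assumes bianchi: "bianchi_I_to_VIII C"
    and Lam_pos: "Lam > 0"
    and g_pd: "\<forall>t\<in>{0..<T}. posdef3 (g t)"
    and K_sym: "\<forall>t\<in>{0..<T}. symm3 (K t)"
    and F_anti: "\<forall>t\<in>{0..<T}. antisymm3 (F t)"
    and rho_pos: "\<forall>t\<in>{0..<T}. rho t > 0"
    and e_nonneg: "\<forall>t\<in>{0..<T}. e t \<ge> 0"
    and Th00_nonneg: "\<forall>t\<in>{0..<T}. Th00 t \<ge> 0"
    and ode_g: "\<forall>t\<in>{0..<T}. (g has_vector_derivative (- 2 *\<^sub>R K t)) (at t within {0..<T})"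
    and ode_K: "\<forall>t\<in>{0..<T}. (K has_vector_derivative
                   Kdot C Lam (g t) (K t) (F t) (E t) (u t) (Th00 t) (Th0 t) (rho t))
                 (at t within {0..<T})"
    and ode_F: "\<forall>t\<in>{0..<T}. (F has_vector_derivative Fdot C (g t) (E t)) (at t within {0..<T})"
    and ode_E: "\<forall>t\<in>{0..<T}. (E has_vector_derivative Edot C (g t) (K t) (F t) (E t) (u t))
                 (at t within {0..<T})"
    and ode_u: "\<forall>t\<in>{0..<T}. (u has_vector_derivative udot C (g t) (K t) (F t) (E t) (u t) (rho t))
                 (at t within {0..<T})"
    and ode_Th00: "\<forall>t\<in>{0..<T}. (Th00 has_real_derivative
                   Th00dot C (g t) (K t) (u t) (Th00 t) (Th0 t) (rho t)) (at t within {0..<T})"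
    and ode_Th0: "\<forall>t\<in>{0..<T}. (Th0 has_vector_derivative
                   Th0dot C (g t) (K t) (u t) (Th0 t) (rho t)) (at t within {0..<T})"
    and ode_rho: "\<forall>t\<in>{0..<T}. (rho has_real_derivative
                   rhodot C (g t) (K t) (E t) (u t) (rho t)) (at t within {0..<T})"
    and ode_e: "\<forall>t\<in>{0..<T}. (e has_real_derivative
                   edot C (g t) (K t) (E t) (u t) (rho t) (e t)) (at t within {0..<T})"
    and cC1: "\<forall>t\<in>{0..<T}. C1 C Lam (g t) (K t) (F t) (E t) (u t) (Th00 t) (rho t)"
    and cC2: "\<forall>t\<in>{0..<T}. C2 C (g t) (K t) (F t) (E t) (u t) (Th0 t) (rho t)"
    and cC3: "\<forall>t\<in>{0..<T}. C3 C (F t)"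
    and cC4: "\<forall>t\<in>{0..<T}. C4 C (g t) (E t) (u t) (e t)"
    and H0_neg: "Hm (g 0) (K 0) < 0"
  shows "\<forall>t\<in>{0..<T}.
           (\<exists>D. ((\<lambda>s. Hm (g s) (K s)) has_real_derivative D) (at t within {0..<T})
                \<and> D \<ge> KK (g t) (K t) - Lam)
         \<and> KK (g t) (K t) - Lam \<ge> (Hm (g t) (K t))^2 / 3 - Lam
         \<and> (Hm (g t) (K t))^2 / 3 - Lam \<ge> 0
         \<and> Hm (g 0) (K 0) - Lam * t \<le> Hm (g t) (K t)
         \<and> Hm (g t) (K t) < - sqrt (3 * Lam)"
proof -
  let ?I = "{0..<T}"
  let ?H = "\<lambda>s. Hm (g s) (K s)"
  have pd: "\<And>s. s \<in> ?I \<Longrightarrow> posdef3 (g s)" using g_pd by blast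
  have pw: "(\<exists>D. (?H has_real_derivative D) (at t within ?I) \<and> D \<ge> KK (g t) (K t) - Lam)
      \<and> KK (g t) (K t) \<ge> (?H t)^2 / 3 \<and> (?H t)^2 > 3 * Lam" if tI: "t \<in> ?I" for t
  proof -
    have T0: "0 < T" using tI by simp
    have lp: "t islimpt ?I" using tI T0 by simp
    have nb: "at t within ?I \<noteq> bot"
      using lp trivial_limit_within[of t ?I] by simp
    let ?h = "matrix_inv (g t)"
    let ?KD = "Kdot C Lam (g t) (K t) (F t) (E t) (u t) (Th00 t) (Th0 t) (rho t)"
    have d: "(?H has_real_derivative
      S (\<lambda>i. S (\<lambda>j. (- S (\<lambda>k. S (\<lambda>l. ?h$i$k * (- 2 *\<^sub>R K t)$k$l * ?h$l$j))) * K t $i$j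
            + ?KD$i$j * ?h$i$j))) (at t within ?I)"
      by (rule H_deriv[OF tI nb pd]) (use ode_g ode_K tI in auto)
    note gi = ginv_props[OF pd[OF tI]]
    have Ks: "symm3 (K t)" using K_sym tI by blast
    have val: "S (\<lambda>i. S (\<lambda>j. (- S (\<lambda>k. S (\<lambda>l. ?h$i$k * (- 2 *\<^sub>R K t)$k$l * ?h$l$j))) * K t $i$j
            + ?KD$i$j * ?h$i$j))
        = 2 * KK (g t) (K t) + S (\<lambda>i. S (\<lambda>j. ?h$i$j * ?KD $ i $ j))"
    proof -
      have "S (\<lambda>i. S (\<lambda>j. (- S (\<lambda>k. S (\<lambda>l. ?h$i$k * (- 2 *\<^sub>R K t)$k$l * ?h$l$j))) * K t $i$j
            + ?KD$i$j * ?h$i$j))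
        = 2 * S (\<lambda>i. S (\<lambda>j. S (\<lambda>k. S (\<lambda>l. ?h$i$k * K t$k$l * ?h$l$j)) * K t $i$j))
          + S (\<lambda>i. S (\<lambda>j. ?h$i$j * ?KD $ i $ j))"
        unfolding sum_3 by (simp add: algebra_simps)
      then show ?thesis unfolding KK_hKh[OF gi(3)] .
    qed
    have bnd: "2 * KK (g t) (K t) + S (\<lambda>i. S (\<lambda>j. ?h$i$j * ?KD $ i $ j)) \<ge> KK (g t) (K t) - Lam"
      by (rule Hdot_bound[OF pd[OF tI] Ks]) (use rho_pos Th00_nonneg cC1 tI in auto)
    have kk: "KK (g t) (K t) \<ge> (?H t)^2 / 3" by (rule KK_ge[OF pd[OF tI]])
    have R: "Rscal C (g t) \<le> 0" by (rule R_nonpos[OF bianchi pd[OF tI]])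
    have t0: "tau00 (g t) (E t) (F t) \<ge> 0" by (rule tau00_nonneg[OF pd[OF tI]])
    have t1: "T00 (g t) (u t) (rho t) (Th00 t) > 0"
      by (rule T00_pos[OF pd[OF tI]]) (use rho_pos Th00_nonneg tI in auto)
    have c: "Rscal C (g t) - KK (g t) (K t) + (?H t)^2 = 16 * pi * (tau00 (g t) (E t) (F t) + T00 (g t) (u t) (rho t) (Th00 t)) + 2 * Lam"
      using cC1 tI by (simp add: C1_def)
    have pp: "16 * pi * (tau00 (g t) (E t) (F t) + T00 (g t) (u t) (rho t) (Th00 t)) > 0"
      using t0 t1 pi_gt_zero by (simp add: mult_pos_pos add_nonneg_pos)
    have h3: "(?H t)^2 > 3 * Lam" using c pp R kk by linarith
    show ?thesis using d val bnd kk h3 by auto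
  qed
  have cont: "continuous_on ?I ?H"
  proof (rule DERIV_continuous_on)
    fix x assume "x \<in> ?I"
    then obtain D where "(?H has_real_derivative D) (at x within ?I)" using pw by blast
    then show "(?H has_real_derivative (SOME D. (?H has_real_derivative D) (at x within ?I))) (at x within ?I)"
      by (rule someI)
  qed
  have mono: "?H 0 \<le> ?H t" if tI: "t \<in> ?I" for t
  proof (rule DERIV_nonneg_imp_increasing_open[where f = "\<lambda>s. Hm (g s) (K s)" and a = 0 and b = t])
    show "0 \<le> t" using tI by simp
    show "continuous_on {0..t} ?H" by (rule continuous_on_subset[OF cont]) (use tI in auto)
    fix x assume x: "0 < x" "x < t"
    then have xI: "x \<in> ?I" using tI by simp
    obtain D where D: "(?H has_real_derivative D) (at x within ?I)" and Dg: "D \<ge> KK (g x) (K x) - Lam"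
      using pw[OF xI] by blast
    have "(?H has_real_derivative D) (at x within {0<..<T})"
      by (rule DERIV_subset[OF D]) auto
    moreover have "at x within {0<..<T} = at x" by (rule at_within_open) (use x tI in auto)
    ultimately have "(?H has_real_derivative D) (at x)" by simp
    moreover have "D \<ge> 0" using pw[OF xI] Dg by linarith
    ultimately show "\<exists>y. (?H has_real_derivative y) (at x) \<and> y \<ge> 0" by blast
  qed
  show ?thesis
  proof (intro ballI conjI)
    fix t assume tI: "t \<in> ?I"
    note P = pw[OF tI]
    show "\<exists>D. (?H has_real_derivative D) (at t within ?I) \<and> D \<ge> KK (g t) (K t) - Lam" using P by blast
    show "KK (g t) (K t) - Lam \<ge> (?H t)^2 / 3 - Lam" using P by linarith
    show "(?H t)^2 / 3 - Lam \<ge> 0" using P by linarith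
    have "Lam * t \<ge> 0" using Lam_pos tI by simp
    then show "?H 0 - Lam * t \<le> ?H t" using mono[OF tI] by linarith
    show "?H t < - sqrt (3 * Lam)"
    proof (rule ccontr)
      assume "\<not> ?H t < - sqrt (3 * Lam)"
      then have ge: "?H t \<ge> - sqrt (3 * Lam)" by simp
      have sq: "(sqrt (3 * Lam))^2 = 3 * Lam" using Lam_pos by simp
      have pos: "?H t > 0"
      proof (rule ccontr)
        assume "\<not> ?H t > 0"
        then have "\<bar>?H t\<bar> \<le> \<bar>sqrt (3 * Lam)\<bar>" using ge by auto
        then have "(?H t)^2 \<le> (sqrt (3 * Lam))^2" by (simp add: abs_le_square_iff)
        then show False using P sq by linarith
      qed
      have sub: "{0..t} \<subseteq> ?I" using tI by auto
      have cc: "continuous_on {0..t} ?H" by (rule continuous_on_subset[OF cont sub])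
      have "\<exists>x. 0 \<le> x \<and> x \<le> t \<and> ?H x = 0"
        by (rule IVT'[of ?H 0 0 t]) (use H0_neg pos tI cc in auto)
      then obtain x where x: "0 \<le> x" "x \<le> t" "?H x = 0" by blast
      then have "x \<in> ?I" using tI by simp
      then have "(?H x)^2 > 3 * Lam" using pw by blast
      then show False using x Lam_pos by simp
    qed
  qed
qed

end
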